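(* Let $G$ be an $F_3$-free graph with $m\ge 33$ edges. Then \[ \lambda(G)\le 1+\sqrt{m-2}, \] and equality holds if and only if $G = K_3\vee \frac{m-3}{3}K_1$ (up to isolated vertices).
   Context: All graphs are finite and simple. $\lambda(G)$ denotes the spectral radius of the adjacency matrix of $G$. The friendship graph $F_k$ consists of $k$ triangles sharing exactly one common vertex (so $F_3$ has 7 vertices and 9 edges). $tK_1$ is the edgeless graph on $t$ vertices and $G\vee H$ is the join of $G$ and $H$. A graph is $F$-free if it contains no subgraph isomorphic to $F$. The graph $K_3\vee\frac{m-3}{3}K_1$ (which exists when $3\mid m$) has exactly $m$ edges. *)

theory Defs
  imports "Jordan_Normal_Form.Spectral_Radius"
begin

definition simple_graph :: "nat \<Rightarrow> (nat \<Rightarrow> nat \<Rightarrow> bool) \<Rightarrow> bool" where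
  "simple_graph n E \<longleftrightarrow>
     (\<forall>i j. E i j \<longrightarrow> i < n \<and> j < n) \<and>
     (\<forall>i j. E i j \<longrightarrow> E j i) \<and>
     (\<forall>i. \<not> E i i)"

definition num_edges :: "nat \<Rightarrow> (nat \<Rightarrow> nat \<Rightarrow> bool) \<Rightarrow> nat" where
  "num_edges n E = card {{i, j} | i j. i < n \<and> j < n \<and> E i j}"

definition adj_mat :: "nat \<Rightarrow> (nat \<Rightarrow> nat \<Rightarrow> bool) \<Rightarrow> complex mat" where
  "adj_mat n E = mat n n (\<lambda>(i, j). if E i j then 1 else 0)"

definition graph_spectral_radius :: "nat \<Rightarrow> (nat \<Rightarrow> nat \<Rightarrow> bool) \<Rightarrow> real" where
  "graph_spectral_radius n E = spectral_radius (adj_mat n E)"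

definition contains_subgraph ::
  "nat \<Rightarrow> (nat \<Rightarrow> nat \<Rightarrow> bool) \<Rightarrow> nat \<Rightarrow> (nat \<Rightarrow> nat \<Rightarrow> bool) \<Rightarrow> bool" where
  "contains_subgraph nG EG nH EH \<longleftrightarrow>
     (\<exists>f. inj_on f {..<nH} \<and> f ` {..<nH} \<subseteq> {..<nG} \<and>
          (\<forall>i<nH. \<forall>j<nH. EH i j \<longrightarrow> EG (f i) (f j)))"

definition friendship_edge :: "nat \<Rightarrow> nat \<Rightarrow> nat \<Rightarrow> bool" where
  "friendship_edge k i j \<longleftrightarrow> i \<le> 2*k \<and> j \<le> 2*k \<and> i \<noteq> j \<and>
     (i = 0 \<or> j = 0 \<or> (\<exists>t. 1 \<le> t \<and> t \<le> k \<and> {i, j} = {2*t - 1, 2*t}))"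

definition F_free :: "nat \<Rightarrow> nat \<Rightarrow> (nat \<Rightarrow> nat \<Rightarrow> bool) \<Rightarrow> bool" where
  "F_free k n E \<longleftrightarrow> \<not> contains_subgraph n E (2*k + 1) (friendship_edge k)"

definition K3_join_edge :: "nat \<Rightarrow> nat \<Rightarrow> nat \<Rightarrow> bool" where
  "K3_join_edge t i j \<longleftrightarrow> i < t + 3 \<and> j < t + 3 \<and> i \<noteq> j \<and> (i < 3 \<or> j < 3)"

definition non_isolated :: "nat \<Rightarrow> (nat \<Rightarrow> nat \<Rightarrow> bool) \<Rightarrow> nat set" where
  "non_isolated n E = {i. i < n \<and> (\<exists>j<n. E i j)}"

definition iso_up_to_isolated ::
  "nat \<Rightarrow> (nat \<Rightarrow> nat \<Rightarrow> bool) \<Rightarrow> nat \<Rightarrow> (nat \<Rightarrow> nat \<Rightarrow> bool) \<Rightarrow> bool" where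
  "iso_up_to_isolated nG EG nH EH \<longleftrightarrow>
     (\<exists>f. bij_betw f (non_isolated nG EG) (non_isolated nH EH) \<and>
          (\<forall>i\<in>non_isolated nG EG. \<forall>j\<in>non_isolated nG EG. EG i j \<longleftrightarrow> EH (f i) (f j)))"

end

theory Submission
  imports Defs
begin


definition gg :: "(nat\<Rightarrow>nat\<Rightarrow>bool) \<Rightarrow> (nat\<Rightarrow>real) \<Rightarrow> nat \<Rightarrow> nat \<Rightarrow> real" where
  "gg E x v w = (if E v w then x v + x w - 1 else 0)"

definition no3 :: "nat set \<Rightarrow> (nat\<Rightarrow>nat\<Rightarrow>bool) \<Rightarrow> bool" where
  "no3 N E \<longleftrightarrow> \<not>(\<exists>a1 b1 a2 b2 a3 b3. a1\<in>N \<and> b1\<in>N \<and> a2\<in>N \<and> b2\<in>N \<and> a3\<in>N \<and> b3\<in>N \<and>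
      distinct [a1,b1,a2,b2,a3,b3] \<and> E a1 b1 \<and> E a2 b2 \<and> E a3 b3)"

lemma no3D:
  assumes "no3 N E" "a1\<in>N" "b1\<in>N" "a2\<in>N" "b2\<in>N" "a3\<in>N" "b3\<in>N"
    "distinct [a1,b1,a2,b2,a3,b3]" "E a1 b1" "E a2 b2" "E a3 b3"
  shows False
  using assms unfolding no3_def by blast

lemma gg_sym: "(\<forall>i j. E i j \<longrightarrow> E j i) \<Longrightarrow> gg E x v w = gg E x w v"
  unfolding gg_def by (auto simp: add.commute)

lemma split_sum:
  assumes fin: "finite N" and WN: "W \<subseteq> N" and sym: "\<forall>i j. E i j \<longrightarrow> E j i"
    and Rind: "\<forall>v\<in>N-W. \<forall>w\<in>N-W. \<not> E v w"
  shows "(\<Sum>v\<in>N. \<Sum>w\<in>N. gg E x v w) =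
     (\<Sum>v\<in>W. \<Sum>w\<in>W. gg E x v w) + 2 * (\<Sum>v\<in>W. \<Sum>r\<in>N-W. gg E x v r)"
proof -
  have finW: "finite W" using fin WN finite_subset by blast
  have split: "\<And>f. (\<Sum>v\<in>N. f v) = (\<Sum>v\<in>W. f v) + (\<Sum>v\<in>N-W. f v)"
    using sum.subset_diff[OF WN fin] by (simp add: add.commute)
  have "(\<Sum>v\<in>N. \<Sum>w\<in>N. gg E x v w) = (\<Sum>v\<in>W. \<Sum>w\<in>N. gg E x v w) + (\<Sum>v\<in>N-W. \<Sum>w\<in>N. gg E x v w)"
    by (rule split)
  also have "(\<Sum>v\<in>W. \<Sum>w\<in>N. gg E x v w) = (\<Sum>v\<in>W. \<Sum>w\<in>W. gg E x v w) + (\<Sum>v\<in>W. \<Sum>w\<in>N-W. gg E x v w)"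
    by (simp add: split sum.distrib)
  also have "(\<Sum>v\<in>N-W. \<Sum>w\<in>N. gg E x v w) = (\<Sum>v\<in>N-W. \<Sum>w\<in>W. gg E x v w) + (\<Sum>v\<in>N-W. \<Sum>w\<in>N-W. gg E x v w)"
    by (simp add: split sum.distrib)
  also have "(\<Sum>v\<in>N-W. \<Sum>w\<in>N-W. gg E x v w) = 0"
    using Rind by (auto simp: gg_def intro!: sum.neutral)
  also have "(\<Sum>v\<in>N-W. \<Sum>w\<in>W. gg E x v w) = (\<Sum>w\<in>W. \<Sum>v\<in>N-W. gg E x w v)"
    by (subst sum.swap) (simp add: gg_sym[OF sym])
  finally show ?thesis by simp
qed


locale mlctx =
  fixes N :: "nat set" and E :: "nat \<Rightarrow> nat \<Rightarrow> bool" and x :: "nat \<Rightarrow> real"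
  assumes fin: "finite N"
    and sym: "\<forall>i j. E i j \<longrightarrow> E j i"
    and irr: "\<forall>i. \<not> E i i"
    and nu: "no3 N E"
    and x0: "\<forall>v\<in>N. 0 \<le> x v"
    and x1: "\<forall>v\<in>N. x v \<le> 1"
    and Xbig: "sum x N > 13/2"
begin

abbreviation "g \<equiv> gg E x"

lemma g_sym: "g v w = g w v" using gg_sym[OF sym] .
lemma g_refl[simp]: "g v v = 0" using irr by (simp add: gg_def)
lemma g_le_half: "v\<in>N \<Longrightarrow> w\<in>N \<Longrightarrow> g v w \<le> x v / 2 + x w / 2"
proof -
  assume a: "v\<in>N" "w\<in>N"
  then have "x v \<le> 1" "x w \<le> 1" "0 \<le> x v" "0 \<le> x w" using x0 x1 by auto
  then show ?thesis by (auto simp: gg_def)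
qed
lemma g_le_right: "v\<in>N \<Longrightarrow> w\<in>N \<Longrightarrow> g v w \<le> x w"
  using x0 x1 by (auto simp: gg_def)
lemma g_le_1: "v\<in>N \<Longrightarrow> w\<in>N \<Longrightarrow> g v w \<le> 1"
proof -
  assume a: "v\<in>N" "w\<in>N"
  then have "x v \<le> 1" "x w \<le> 1" "0 \<le> x v" "0 \<le> x w" using x0 x1 by auto
  then show ?thesis by (auto simp: gg_def)
qed

lemma GW4:
  assumes "distinct [a,b,c,d]"
  shows "(\<Sum>v\<in>{a,b,c,d}. \<Sum>w\<in>{a,b,c,d}. g v w) =
     2*(g a b + g a c + g a d + g b c + g b d + g c d)"
  using assms by (simp add: g_sym[of b a] g_sym[of c a] g_sym[of d a] g_sym[of c b]
     g_sym[of d b] g_sym[of d c])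

lemma GW2:
  assumes "a \<noteq> b"
  shows "(\<Sum>v\<in>{a,b}. \<Sum>w\<in>{a,b}. g v w) = 2*g a b"
  using assms by (simp add: g_sym[of b a])

lemma s_le_XR: "w\<in>N \<Longrightarrow> R \<subseteq> N \<Longrightarrow> (\<Sum>r\<in>R. g w r) \<le> sum x R"
  by (rule sum_mono) (use g_le_right in blast)

lemma s_zero: "\<forall>r\<in>R. \<not> E w r \<Longrightarrow> (\<Sum>r\<in>R. g w r) = 0"
  by (auto simp: gg_def intro!: sum.neutral)

lemma s_single:
  assumes "w\<in>N" "R \<subseteq> N" "\<forall>r\<in>R. E w r \<longrightarrow> r = r0" "finite R"
  shows "(\<Sum>r\<in>R. g w r) \<le> 1"
proof (cases "r0 \<in> R")
  case True
  have "(\<Sum>r\<in>R. g w r) = g w r0 + (\<Sum>r\<in>R-{r0}. g w r)"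
    using True assms(4) by (simp add: sum.remove)
  also have "(\<Sum>r\<in>R-{r0}. g w r) = 0" using assms(3) by (auto simp: gg_def intro!: sum.neutral)
  finally show ?thesis using g_le_1[of w r0] True assms by auto
next
  case False
  then have "(\<Sum>r\<in>R. g w r) = 0" using assms(3) by (auto simp: gg_def intro!: sum.neutral)
  then show ?thesis by simp
qed

lemma sumx_nonneg: "R \<subseteq> N \<Longrightarrow> 0 \<le> sum x R"
  using x0 by (auto intro!: sum_nonneg)

lemma X_split: "W \<subseteq> N \<Longrightarrow> sum x N = sum x W + sum x (N - W)"
  using sum.subset_diff[of W N x] fin by simp

lemma XW4: "distinct [a,b,c,d] \<Longrightarrow> sum x {a,b,c,d} = x a + x b + x c + x d"
  by simp

end


definition book :: "nat set \<Rightarrow> (nat\<Rightarrow>nat\<Rightarrow>bool) \<Rightarrow> (nat\<Rightarrow>real) \<Rightarrow> bool" where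
  "book N E x \<longleftrightarrow> (\<exists>a b. a\<in>N \<and> b\<in>N \<and> a\<noteq>b \<and> x a = 1 \<and> x b = 1 \<and>
     (\<forall>v\<in>N. \<forall>w\<in>N. E v w \<longleftrightarrow> v \<noteq> w \<and> (v = a \<or> v = b \<or> w = a \<or> w = b)))"


lemma six_arith:
  fixes a b c d :: real
  assumes "0\<le>a" "a\<le>1" "0\<le>b" "b\<le>1" "0\<le>c" "c\<le>1" "0\<le>d" "d\<le>1"
  shows "(a+b-1) + (if P then a+c-1 else 0) + (if Q then a+d-1 else 0) + (if S then b+c-1 else 0) + (c+d-1)
     \<le> a + 2*b + c + 2*d - 1"
  using assms by (cases P; cases Q; cases S; simp)
lemma six_arith_eq:
  fixes a b c d :: real
  assumes "0<a" "a\<le>1" "0<b" "b\<le>1" "0<c" "c\<le>1" "0<d" "d\<le>1"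
   "(a+b-1) + (if P then a+c-1 else 0) + (if Q then a+d-1 else 0) + (if S then b+c-1 else 0) + (c+d-1)
     = a + 2*b + c + 2*d - 1"
  shows "P \<and> Q \<and> S \<and> a = 1 \<and> c = 1"
  using assms by (cases P; cases Q; cases S; simp)

context mlctx begin

context
  fixes y1 z1 y2 z2
  assumes inN: "y1\<in>N" "z1\<in>N" "y2\<in>N" "z2\<in>N" and dist: "distinct [y1,z1,y2,z2]"
    and e1: "E y1 z1" and e2: "E y2 z2"
begin

abbreviation "R \<equiv> N - {y1,z1,y2,z2}"

lemma RN: "R \<subseteq> N" by auto
lemma finR: "finite R" using fin by auto

lemma Rind: "\<forall>v\<in>R. \<forall>w\<in>R. \<not> E v w"
proof (intro ballI notI)
  fix v w assume v: "v\<in>R" and w: "w\<in>R" and E: "E v w"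
  have "v \<noteq> w" using E irr by auto
  then show False using no3D[OF nu inN(1,2,3,4), of v w] v w dist e1 e2 E by auto
qed

lemma Gsplit: "(\<Sum>v\<in>N. \<Sum>w\<in>N. g v w) =
   2*g y1 z1 + 2*g y1 y2 + 2*g y1 z2 + 2*g z1 y2 + 2*g z1 z2 + 2*g y2 z2 +
   2*(\<Sum>r\<in>R. g y1 r) + 2*(\<Sum>r\<in>R. g z1 r) + 2*(\<Sum>r\<in>R. g y2 r) + 2*(\<Sum>r\<in>R. g z2 r)"
proof -
  have WN: "{y1,z1,y2,z2} \<subseteq> N" using inN by auto
  have "(\<Sum>v\<in>N. \<Sum>w\<in>N. g v w) = (\<Sum>v\<in>{y1,z1,y2,z2}. \<Sum>w\<in>{y1,z1,y2,z2}. g v w) +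
     2 * (\<Sum>v\<in>{y1,z1,y2,z2}. \<Sum>r\<in>R. g v r)"
    by (rule split_sum[OF fin WN sym]) (use Rind in blast)
  also have "(\<Sum>v\<in>{y1,z1,y2,z2}. \<Sum>r\<in>R. g v r) =
     (\<Sum>r\<in>R. g y1 r) + (\<Sum>r\<in>R. g z1 r) + (\<Sum>r\<in>R. g y2 r) + (\<Sum>r\<in>R. g z2 r)"
    using dist by (simp add: add.assoc)
  finally show ?thesis using GW4[OF dist] by (simp add: algebra_simps)
qed

lemma Xsplit: "sum x N = x y1 + x z1 + x y2 + x z2 + sum x R"
  using X_split[of "{y1,z1,y2,z2}"] inN dist by simp

lemma xs: "0 \<le> x y1" "x y1 \<le> 1" "0 \<le> x z1" "x z1 \<le> 1" "0 \<le> x y2" "x y2 \<le> 1" "0 \<le> x z2" "x z2 \<le> 1"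
  using x0 x1 inN by auto

lemma XRbig: "sum x R > 5/2"
  using Xsplit Xbig xs by linarith

lemma six_half: "g y1 z1 + g y1 y2 + g y1 z2 + g z1 y2 + g z1 z2 + g y2 z2 \<le>
   3/2 * x y1 + 3/2 * x z1 + 3/2 * x y2 + 3/2 * x z2"
  using g_le_half[OF inN(1) inN(2)] g_le_half[OF inN(1) inN(3)] g_le_half[OF inN(1) inN(4)]
    g_le_half[OF inN(2) inN(3)] g_le_half[OF inN(2) inN(4)] g_le_half[OF inN(3) inN(4)]
  by linarith

lemma sR: "w \<in> N \<Longrightarrow> (\<Sum>r\<in>R. g w r) \<le> sum x R"
  by (rule s_le_XR) auto

lemma pair1: "r\<in>R \<Longrightarrow> r'\<in>R \<Longrightarrow> E y1 r \<Longrightarrow> E z1 r' \<Longrightarrow> r = r'"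
  using no3D[OF nu inN(1) _ inN(2) _ inN(3) inN(4), of r r'] dist e2 by auto

lemma pair2: "r\<in>R \<Longrightarrow> r'\<in>R \<Longrightarrow> E y2 r \<Longrightarrow> E z2 r' \<Longrightarrow> r = r'"
  using no3D[OF nu inN(3) _ inN(4) _ inN(1) inN(2), of r r'] dist e1 by auto

lemma core_BB:
  assumes "\<forall>r\<in>R. E y1 r \<longrightarrow> r = r1" "\<forall>r\<in>R. E z1 r \<longrightarrow> r = r1"
    "\<forall>r\<in>R. E y2 r \<longrightarrow> r = r2" "\<forall>r\<in>R. E z2 r \<longrightarrow> r = r2"
  shows "(\<Sum>v\<in>N. \<Sum>w\<in>N. g v w) < 4 * sum x N - 6"
proof -
  have "(\<Sum>r\<in>R. g y1 r) \<le> 1" "(\<Sum>r\<in>R. g z1 r) \<le> 1" "(\<Sum>r\<in>R. g y2 r) \<le> 1" "(\<Sum>r\<in>R. g z2 r) \<le> 1"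
    using s_single[OF inN(1) RN assms(1) finR] s_single[OF inN(2) RN assms(2) finR]
      s_single[OF inN(3) RN assms(3) finR] s_single[OF inN(4) RN assms(4) finR] by auto
  then show ?thesis using Gsplit six_half Xbig xs by linarith
qed

lemma core_AB:
  assumes "\<forall>r\<in>R. \<not> E z1 r"
    "\<forall>r\<in>R. E y2 r \<longrightarrow> r = r2" "\<forall>r\<in>R. E z2 r \<longrightarrow> r = r2" "r2 \<in> R" "E y2 r2" "E z2 r2"
  shows "(\<Sum>v\<in>N. \<Sum>w\<in>N. g v w) < 4 * sum x N - 6"
proof -
  have s2: "(\<Sum>r\<in>R. g y2 r) \<le> 1" "(\<Sum>r\<in>R. g z2 r) \<le> 1"
    using s_single[OF inN(3) RN assms(2) finR] s_single[OF inN(4) RN assms(3) finR] by auto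
  have s1: "(\<Sum>r\<in>R. g z1 r) = 0" using s_zero assms(1) by blast
  show ?thesis
  proof (cases "\<forall>r\<in>R. E y1 r \<longrightarrow> r = r2")
    case True
    then have "(\<Sum>r\<in>R. g y1 r) \<le> 1" using s_single[OF inN(1) RN _ finR] by blast
    then show ?thesis using Gsplit six_half Xbig xs s1 s2 by linarith
  next
    case False
    then obtain r where r: "r\<in>R" "E y1 r" "r \<noteq> r2" by blast
    have n1: "\<not> E z1 z2"
      using no3D[OF nu inN(1) _ inN(3) _ inN(2) inN(4), of r r2] r assms(4,5,6) dist by auto
    have n2: "\<not> E z1 y2"
      using no3D[OF nu inN(1) _ inN(4) _ inN(2) inN(3), of r r2] r assms(4,5,6) dist by auto
    have "g z1 z2 = 0" "g z1 y2 = 0" using n1 n2 by (auto simp: gg_def)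
    moreover have "g y1 z1 + g y1 y2 + g y1 z2 + g y2 z2 \<le> x y1 + x z1 + x y2 + x z2 + 1/2"
      using g_le_half[OF inN(1) inN(2)] g_le_half[OF inN(1) inN(3)] g_le_half[OF inN(1) inN(4)]
        g_le_half[OF inN(3) inN(4)] xs by linarith
    moreover have "(\<Sum>r\<in>R. g y1 r) \<le> sum x R" using sR inN by auto
    ultimately show ?thesis using Gsplit Xbig xs s1 s2 Xsplit by linarith
  qed
qed

lemma six_eq:
  assumes n: "\<not> E z1 z2"
  shows "g y1 z1 + g y1 y2 + g y1 z2 + g z1 y2 + g z1 z2 + g y2 z2 \<le> x y1 + 2*x z1 + x y2 + 2*x z2 - 1"
    and "(\<forall>v\<in>N. 0 < x v) \<Longrightarrow> g y1 z1 + g y1 y2 + g y1 z2 + g z1 y2 + g z1 z2 + g y2 z2 = x y1 + 2*x z1 + x y2 + 2*x z2 - 1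
       \<Longrightarrow> E y1 y2 \<and> E y1 z2 \<and> E z1 y2 \<and> x y1 = 1 \<and> x y2 = 1"
proof -
  have ex: "g y1 z1 + g y1 y2 + g y1 z2 + g z1 y2 + g z1 z2 + g y2 z2 =
    (x y1 + x z1 - 1) + (if E y1 y2 then x y1 + x y2 - 1 else 0) + (if E y1 z2 then x y1 + x z2 - 1 else 0)
    + (if E z1 y2 then x z1 + x y2 - 1 else 0) + (x y2 + x z2 - 1)"
    using n e1 e2 by (simp add: gg_def)
  show "g y1 z1 + g y1 y2 + g y1 z2 + g z1 y2 + g z1 z2 + g y2 z2 \<le> x y1 + 2*x z1 + x y2 + 2*x z2 - 1"
    unfolding ex by (rule six_arith[OF xs])
  assume pos: "\<forall>v\<in>N. 0 < x v"
  have p: "0 < x y1" "0 < x z1" "0 < x y2" "0 < x z2" using pos inN by auto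
  assume "g y1 z1 + g y1 y2 + g y1 z2 + g z1 y2 + g z1 z2 + g y2 z2 = x y1 + 2*x z1 + x y2 + 2*x z2 - 1"
  then have eqn: "(x y1 + x z1 - 1) + (if E y1 y2 then x y1 + x y2 - 1 else 0) + (if E y1 z2 then x y1 + x z2 - 1 else 0)
    + (if E z1 y2 then x z1 + x y2 - 1 else 0) + (x y2 + x z2 - 1) = x y1 + 2*x z1 + x y2 + 2*x z2 - 1"
    unfolding ex .
  show "E y1 y2 \<and> E y1 z2 \<and> E z1 y2 \<and> x y1 = 1 \<and> x y2 = 1"
    by (rule six_arith_eq[OF p(1) xs(2) p(2) xs(4) p(3) xs(6) p(4) xs(8) eqn])
qed

lemma s_bound1:
  assumes "w \<in> N" "r0 \<in> R" "E w r0"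
  shows "(\<Sum>r\<in>R. g w r) \<le> sum x R - 1 + x w"
proof -
  have 1: "(\<Sum>r\<in>R. g w r) = g w r0 + (\<Sum>r\<in>R-{r0}. g w r)"
    using assms finR by (simp add: sum.remove)
  have 2: "(\<Sum>r\<in>R-{r0}. g w r) \<le> (\<Sum>r\<in>R-{r0}. x r)"
    by (rule sum_mono) (use g_le_right assms in auto)
  have 3: "sum x R = x r0 + (\<Sum>r\<in>R-{r0}. x r)"
    using assms finR by (simp add: sum.remove)
  have 4: "g w r0 = x w + x r0 - 1" using assms by (simp add: gg_def)
  show ?thesis using 1 2 3 4 by linarith
qed

lemma full_adj:
  assumes pos: "\<forall>v\<in>N. 0 < x v" and wN: "w \<in> N"
    and eq: "(\<Sum>r\<in>R. g w r) = sum x R"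
  shows "\<forall>r\<in>R. E w r"
proof -
  have sub: "(\<Sum>r\<in>R. x r - g w r) = sum x R - (\<Sum>r\<in>R. g w r)" by (rule sum_subtractf)
  have zero: "(\<Sum>r\<in>R. x r - g w r) = 0" using sub eq by simp
  have nonneg: "\<And>r. r\<in>R \<Longrightarrow> 0 \<le> x r - g w r"
  proof -
    fix r assume "r \<in> R"
    then have "r \<in> N" by blast
    then show "0 \<le> x r - g w r" using g_le_right[OF wN] by simp
  qed
  have z: "\<And>r. r\<in>R \<Longrightarrow> x r - g w r = 0"
    using sum_nonneg_eq_0_iff[OF finR, of "\<lambda>r. x r - g w r"] nonneg zero by simp
  show ?thesis
  proof
    fix r assume r: "r \<in> R"
    have "0 < x r" using pos r by auto
    moreover have "x r = g w r" using z[OF r] by simp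
    ultimately show "E w r" unfolding gg_def by (cases "E w r") auto
  qed
qed

lemma core_AA:
  assumes A1: "\<forall>r\<in>R. \<not> E z1 r" and A2: "\<forall>r\<in>R. \<not> E z2 r"
  shows "(\<Sum>v\<in>N. \<Sum>w\<in>N. g v w) \<le> 4 * sum x N - 6 \<and>
    ((\<forall>v\<in>N. 0 < x v) \<longrightarrow> (\<Sum>v\<in>N. \<Sum>w\<in>N. g v w) = 4 * sum x N - 6 \<longrightarrow> book N E x)"
proof -
  have s1: "(\<Sum>r\<in>R. g z1 r) = 0" "(\<Sum>r\<in>R. g z2 r) = 0" using s_zero A1 A2 by blast+
  have sy: "(\<Sum>r\<in>R. g y1 r) \<le> sum x R" "(\<Sum>r\<in>R. g y2 r) \<le> sum x R" using sR inN by auto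
  show ?thesis
  proof (cases "\<exists>r1\<in>R. \<exists>r2\<in>R. r1 \<noteq> r2 \<and> E y1 r1 \<and> E y2 r2")
    case True
    then obtain r1 r2 where r: "r1\<in>R" "r2\<in>R" "r1 \<noteq> r2" "E y1 r1" "E y2 r2" by blast
    have n: "\<not> E z1 z2"
      using no3D[OF nu inN(1) _ inN(3) _ inN(2) inN(4), of r1 r2] r dist by auto
    have sb1: "(\<Sum>r\<in>R. g y1 r) \<le> sum x R - 1 + x y1" using s_bound1[OF inN(1) r(1,4)] .
    have sb2: "(\<Sum>r\<in>R. g y2 r) \<le> sum x R - 1 + x y2" using s_bound1[OF inN(3) r(2,5)] .
    note se = six_eq[OF n]
    have le: "(\<Sum>v\<in>N. \<Sum>w\<in>N. g v w) \<le> 4 * sum x N - 6"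
      using se(1) Gsplit Xsplit s1 sb1 sb2 by linarith
    moreover have "(\<forall>v\<in>N. 0 < x v) \<longrightarrow> (\<Sum>v\<in>N. \<Sum>w\<in>N. g v w) = 4 * sum x N - 6 \<longrightarrow> book N E x"
    proof (intro impI)
      assume pos: "\<forall>v\<in>N. 0 < x v" and eq: "(\<Sum>v\<in>N. \<Sum>w\<in>N. g v w) = 4 * sum x N - 6"
      have e6: "g y1 z1 + g y1 y2 + g y1 z2 + g z1 y2 + g z1 z2 + g y2 z2 = x y1 + 2*x z1 + x y2 + 2*x z2 - 1"
        and eR1: "(\<Sum>r\<in>R. g y1 r) = sum x R - 1 + x y1" and eR2: "(\<Sum>r\<in>R. g y2 r) = sum x R - 1 + x y2"
        using se(1) eq Gsplit Xsplit s1 sb1 sb2 by linarith+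
      from se(2)[OF pos e6] have E3: "E y1 y2" "E y1 z2" "E z1 y2" and xy: "x y1 = 1" "x y2 = 1" by auto
      have F1: "\<forall>r\<in>R. E y1 r" using full_adj[OF pos inN(1)] eR1 xy by simp
      have F2: "\<forall>r\<in>R. E y2 r" using full_adj[OF pos inN(3)] eR2 xy by simp
      have F1': "\<forall>r\<in>R. E r y1" "\<forall>r\<in>R. E r y2" using F1 F2 sym by blast+
      have A': "\<forall>r\<in>R. \<not> E r z1" "\<forall>r\<in>R. \<not> E r z2" using A1 A2 sym by blast+
      have Er: "E z1 y1" "E z2 y2" "E y2 y1" "E z2 y1" "E y2 z1" "\<not> E z2 z1"
        using E3 e1 e2 n sym by blast+
      have N_eq: "N = {y1,z1,y2,z2} \<union> R" using inN by auto
      have key: "\<forall>v\<in>N. \<forall>w\<in>N. E v w \<longleftrightarrow> v \<noteq> w \<and> (v = y1 \<or> v = y2 \<or> w = y1 \<or> w = y2)"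
      proof (intro ballI)
        fix v w assume v: "v\<in>N" and w: "w\<in>N"
        show "E v w \<longleftrightarrow> v \<noteq> w \<and> (v = y1 \<or> v = y2 \<or> w = y1 \<or> w = y2)"
        proof (cases "v \<in> R")
          case vR: True
          show ?thesis
          proof (cases "w \<in> R")
            case True then show ?thesis using Rind vR by auto
          next
            case False
            then have "w = y1 \<or> w = z1 \<or> w = y2 \<or> w = z2" using w by auto
            then show ?thesis using vR F1' A' by auto
          qed
        next
          case vW: False
          then have v4: "v = y1 \<or> v = z1 \<or> v = y2 \<or> v = z2" using v by auto
          show ?thesis
          proof (cases "w \<in> R")
            case True then show ?thesis using v4 F1 F2 A1 A2 by auto
          next
            case False
            then have "w = y1 \<or> w = z1 \<or> w = y2 \<or> w = z2" using w by auto
            then show ?thesis using v4 E3 e1 e2 n irr dist Er by auto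
          qed
        qed
      qed
      show "book N E x" unfolding book_def
        using inN dist xy key by (intro exI[of _ y1] exI[of _ y2]) auto
    qed
    ultimately show ?thesis by blast
  next
    case False
    have less: "(\<Sum>v\<in>N. \<Sum>w\<in>N. g v w) < 4 * sum x N - 6"
    proof (cases "\<forall>r\<in>R. \<not> E y1 r")
      case True
      then have "(\<Sum>r\<in>R. g y1 r) = 0" using s_zero by blast
      then show ?thesis using Gsplit Xsplit s1 sy six_half xs XRbig Xbig by linarith
    next
      case c1: False
      then obtain r0 where r0: "r0\<in>R" "E y1 r0" by blast
      show ?thesis
      proof (cases "\<forall>r\<in>R. \<not> E y2 r")
        case True
        then have "(\<Sum>r\<in>R. g y2 r) = 0" using s_zero by blast
        then show ?thesis using Gsplit Xsplit s1 sy six_half xs XRbig Xbig by linarith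
      next
        case c2: False
        then obtain r3 where r3: "r3\<in>R" "E y2 r3" by blast
        have a1: "\<forall>r\<in>R. E y1 r \<longrightarrow> r = r3" using False r3 by blast
        have a2: "\<forall>r\<in>R. E y2 r \<longrightarrow> r = r3" using False r0 a1 by metis
        have "(\<Sum>r\<in>R. g y1 r) \<le> 1" "(\<Sum>r\<in>R. g y2 r) \<le> 1"
          using s_single[OF inN(1) RN a1 finR] s_single[OF inN(3) RN a2 finR] by auto
        then show ?thesis using Gsplit Xsplit s1 six_half xs XRbig Xbig by linarith
      qed
    qed
    then show ?thesis by auto
  qed
qed

end
end


context mlctx begin

lemma core1:
  assumes p: "p\<in>N" and q: "q\<in>N" and e: "E p q"
    and no2: "\<not>(\<exists>y1 z1 y2 z2. y1\<in>N \<and> z1\<in>N \<and> y2\<in>N \<and> z2\<in>N \<and> distinct [y1,z1,y2,z2] \<and> E y1 z1 \<and> E y2 z2)"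
  shows "(\<Sum>v\<in>N. \<Sum>w\<in>N. g v w) < 4 * sum x N - 6"
proof -
  have pq: "p \<noteq> q" using e irr by auto
  let ?R = "N - {p,q}"
  have RN: "?R \<subseteq> N" by auto
  have finR: "finite ?R" using fin by auto
  have Rind: "\<forall>v\<in>?R. \<forall>w\<in>?R. \<not> E v w"
  proof (intro ballI notI)
    fix v w assume v: "v\<in>?R" and w: "w\<in>?R" and E: "E v w"
    have "v \<noteq> w" using E irr by auto
    then have "distinct [p,q,v,w]" using v w pq by auto
    then show False using no2 p q v w e E by blast
  qed
  have G: "(\<Sum>v\<in>N. \<Sum>w\<in>N. g v w) = 2 * g p q + 2 * (\<Sum>r\<in>?R. g p r) + 2 * (\<Sum>r\<in>?R. g q r)"
  proof -
    have WN: "{p,q} \<subseteq> N" using p q by auto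
    have "(\<Sum>v\<in>N. \<Sum>w\<in>N. g v w) = (\<Sum>v\<in>{p,q}. \<Sum>w\<in>{p,q}. g v w) + 2 * (\<Sum>v\<in>{p,q}. \<Sum>r\<in>?R. g v r)"
      by (rule split_sum[OF fin WN sym]) (use Rind in blast)
    moreover have "(\<Sum>v\<in>{p,q}. \<Sum>r\<in>?R. g v r) = (\<Sum>r\<in>?R. g p r) + (\<Sum>r\<in>?R. g q r)"
      using pq by simp
    ultimately show ?thesis using GW2[OF pq] by simp
  qed
  have X: "sum x N = x p + x q + sum x ?R"
    using X_split[of "{p,q}"] p q pq by simp
  have xs: "0 \<le> x p" "x p \<le> 1" "0 \<le> x q" "x q \<le> 1" using x0 x1 p q by auto
  have gpq: "g p q \<le> 1" using g_le_1[OF p q] .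
  have sp: "(\<Sum>r\<in>?R. g p r) \<le> sum x ?R" using s_le_XR[OF p RN] .
  have sq: "(\<Sum>r\<in>?R. g q r) \<le> sum x ?R" using s_le_XR[OF q RN] .
  show ?thesis
  proof (cases "\<forall>r\<in>?R. \<not> E p r")
    case True
    then have "(\<Sum>r\<in>?R. g p r) = 0" using s_zero by blast
    then show ?thesis using G X xs gpq sq Xbig by linarith
  next
    case F1: False
    then obtain ra where ra: "ra \<in> ?R" "E p ra" by blast
    show ?thesis
    proof (cases "\<forall>r\<in>?R. \<not> E q r")
      case True
      then have "(\<Sum>r\<in>?R. g q r) = 0" using s_zero by blast
      then show ?thesis using G X xs gpq sp Xbig by linarith
    next
      case False
      then obtain rb where rb: "rb \<in> ?R" "E q rb" by blast
      have one: "\<And>r r'. r\<in>?R \<Longrightarrow> r'\<in>?R \<Longrightarrow> E p r \<Longrightarrow> E q r' \<Longrightarrow> r = r'"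
      proof (rule ccontr)
        fix r r' assume r: "r\<in>?R" "r'\<in>?R" "E p r" "E q r'" "r \<noteq> r'"
        then have "distinct [p,r,q,r']" using pq by auto
        then show False using no2 p q r by blast
      qed
      have a1: "\<forall>r\<in>?R. E p r \<longrightarrow> r = rb" using one rb by blast
      have a2: "\<forall>r\<in>?R. E q r \<longrightarrow> r = ra" using one ra by blast
      have "(\<Sum>r\<in>?R. g p r) \<le> 1" "(\<Sum>r\<in>?R. g q r) \<le> 1"
        using s_single[OF p RN a1 finR] s_single[OF q RN a2 finR] by auto
      then show ?thesis using G X xs gpq Xbig sumx_nonneg[OF RN] by linarith
    qed
  qed
qed

lemma core0:
  assumes "\<not>(\<exists>p\<in>N. \<exists>q\<in>N. E p q)"
  shows "(\<Sum>v\<in>N. \<Sum>w\<in>N. g v w) < 4 * sum x N - 6"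
proof -
  have "(\<Sum>v\<in>N. \<Sum>w\<in>N. g v w) = 0" using assms by (auto simp: gg_def intro!: sum.neutral)
  then show ?thesis using Xbig by linarith
qed

end


context mlctx begin

lemma types:
  assumes inN: "y1\<in>N" "z1\<in>N" "y2\<in>N" "z2\<in>N" and dist: "distinct [y1,z1,y2,z2]"
    and e1: "E y1 z1" and e2: "E y2 z2"
  shows "(\<forall>r\<in>N - {y1,z1,y2,z2}. \<not> E z1 r) \<or> (\<forall>r\<in>N - {y1,z1,y2,z2}. \<not> E y1 r) \<or>
    (\<exists>r1\<in>N - {y1,z1,y2,z2}. E y1 r1 \<and> E z1 r1 \<and> (\<forall>r\<in>N - {y1,z1,y2,z2}. E y1 r \<longrightarrow> r = r1)
        \<and> (\<forall>r\<in>N - {y1,z1,y2,z2}. E z1 r \<longrightarrow> r = r1))"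
proof -
  note P = pair1[OF inN dist e1 e2]
  show ?thesis
  proof (cases "(\<forall>r\<in>N - {y1,z1,y2,z2}. \<not> E z1 r) \<or> (\<forall>r\<in>N - {y1,z1,y2,z2}. \<not> E y1 r)")
    case True then show ?thesis by blast
  next
    case False
    then obtain ra rb where ra: "ra \<in> N - {y1,z1,y2,z2}" "E z1 ra" and rb: "rb \<in> N - {y1,z1,y2,z2}" "E y1 rb"
      by blast
    have "rb = ra" using P[OF rb(1) ra(1) rb(2) ra(2)] .
    moreover have "\<forall>r\<in>N - {y1,z1,y2,z2}. E y1 r \<longrightarrow> r = ra" using P ra by blast
    moreover have "\<forall>r\<in>N - {y1,z1,y2,z2}. E z1 r \<longrightarrow> r = ra" using P rb \<open>rb = ra\<close> by blast
    ultimately show ?thesis using ra rb by blast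
  qed
qed

lemma mlmain:
  "(\<Sum>v\<in>N. \<Sum>w\<in>N. g v w) \<le> 4 * sum x N - 6 \<and>
    ((\<forall>v\<in>N. 0 < x v) \<longrightarrow> (\<Sum>v\<in>N. \<Sum>w\<in>N. g v w) = 4 * sum x N - 6 \<longrightarrow> book N E x)"
proof (cases "\<exists>y1 z1 y2 z2. y1\<in>N \<and> z1\<in>N \<and> y2\<in>N \<and> z2\<in>N \<and> distinct [y1,z1,y2,z2] \<and> E y1 z1 \<and> E y2 z2")
  case True
  then obtain y1 z1 y2 z2 where inN: "y1\<in>N" "z1\<in>N" "y2\<in>N" "z2\<in>N" and dist: "distinct [y1,z1,y2,z2]"
    and e1: "E y1 z1" and e2: "E y2 z2" by blast
  have e1': "E z1 y1" and e2': "E z2 y2" using e1 e2 sym by blast+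
  have d2: "distinct [y2,z2,y1,z1]" using dist by auto
  have s1: "N - {z1,y1,y2,z2} = N - {y1,z1,y2,z2}" "N - {y1,z1,z2,y2} = N - {y1,z1,y2,z2}"
     "N - {z1,y1,z2,y2} = N - {y1,z1,y2,z2}" "N - {y2,z2,y1,z1} = N - {y1,z1,y2,z2}"
     "N - {z2,y2,y1,z1} = N - {y1,z1,y2,z2}"
    by auto
  note T1 = types[OF inN dist e1 e2]
  note T2 = types[OF inN(3,4,1,2) d2 e2 e1]
  note T2 = T2[unfolded s1]
  note AA = core_AA[OF inN dist e1 e2] core_AA[OF inN(2,1,3,4) _ e1' e2, unfolded s1]
    core_AA[OF inN(1,2,4,3) _ e1 e2', unfolded s1] core_AA[OF inN(2,1,4,3) _ e1' e2', unfolded s1]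
  note AB = core_AB[OF inN dist e1 e2] core_AB[OF inN(2,1,3,4) _ e1' e2, unfolded s1]
    core_AB[OF inN(3,4,1,2) d2 e2 e1, unfolded s1] core_AB[OF inN(4,3,1,2) _ e2' e1, unfolded s1]
  note BB = core_BB[OF inN dist e1 e2]
  have dd: "distinct [z1,y1,y2,z2]" "distinct [y1,z1,z2,y2]" "distinct [z1,y1,z2,y2]" "distinct [z2,y2,y1,z1]"
    using dist by auto
  let ?R = "N - {y1,z1,y2,z2}"
  have fl: "\<And>G X. (G::real) < 4 * X - 6 \<Longrightarrow> G \<le> 4 * X - 6 \<and> (Q \<longrightarrow> G = 4 * X - 6 \<longrightarrow> P)" for Q P
    by auto
  from T1 show ?thesis
  proof (elim disjE)
    assume a1: "\<forall>r\<in>?R. \<not> E z1 r"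
    from T2 show ?thesis
    proof (elim disjE)
      assume a2: "\<forall>r\<in>?R. \<not> E z2 r" show ?thesis by (rule AA(1)[OF a1 a2])
    next
      assume a2: "\<forall>r\<in>?R. \<not> E y2 r" show ?thesis by (rule AA(3)[OF dd(2) a1 a2])
    next
      assume "\<exists>r1\<in>?R. E y2 r1 \<and> E z2 r1 \<and> (\<forall>r\<in>?R. E y2 r \<longrightarrow> r = r1) \<and> (\<forall>r\<in>?R. E z2 r \<longrightarrow> r = r1)"
      then obtain r2 where b: "r2\<in>?R" "E y2 r2" "E z2 r2" "\<forall>r\<in>?R. E y2 r \<longrightarrow> r = r2" "\<forall>r\<in>?R. E z2 r \<longrightarrow> r = r2"
        by blast
      show ?thesis by (rule fl[OF AB(1)[OF a1 b(4) b(5) b(1) b(2) b(3)]])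
    qed
  next
    assume a1: "\<forall>r\<in>?R. \<not> E y1 r"
    from T2 show ?thesis
    proof (elim disjE)
      assume a2: "\<forall>r\<in>?R. \<not> E z2 r" show ?thesis by (rule AA(2)[OF dd(1) a1 a2])
    next
      assume a2: "\<forall>r\<in>?R. \<not> E y2 r" show ?thesis by (rule AA(4)[OF dd(3) a1 a2])
    next
      assume "\<exists>r1\<in>?R. E y2 r1 \<and> E z2 r1 \<and> (\<forall>r\<in>?R. E y2 r \<longrightarrow> r = r1) \<and> (\<forall>r\<in>?R. E z2 r \<longrightarrow> r = r1)"
      then obtain r2 where b: "r2\<in>?R" "E y2 r2" "E z2 r2" "\<forall>r\<in>?R. E y2 r \<longrightarrow> r = r2" "\<forall>r\<in>?R. E z2 r \<longrightarrow> r = r2"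
        by blast
      show ?thesis by (rule fl[OF AB(2)[OF dd(1) a1 b(4) b(5) b(1) b(2) b(3)]])
    qed
  next
    assume "\<exists>r1\<in>?R. E y1 r1 \<and> E z1 r1 \<and> (\<forall>r\<in>?R. E y1 r \<longrightarrow> r = r1) \<and> (\<forall>r\<in>?R. E z1 r \<longrightarrow> r = r1)"
    then obtain r1 where c: "r1\<in>?R" "E y1 r1" "E z1 r1" "\<forall>r\<in>?R. E y1 r \<longrightarrow> r = r1" "\<forall>r\<in>?R. E z1 r \<longrightarrow> r = r1"
      by blast
    from T2 show ?thesis
    proof (elim disjE)
      assume a2: "\<forall>r\<in>?R. \<not> E z2 r" show ?thesis by (rule fl[OF AB(3)[OF a2 c(4) c(5) c(1) c(2) c(3)]])
    next
      assume a2: "\<forall>r\<in>?R. \<not> E y2 r" show ?thesis by (rule fl[OF AB(4)[OF dd(4) a2 c(4) c(5) c(1) c(2) c(3)]])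
    next
      assume "\<exists>r1\<in>?R. E y2 r1 \<and> E z2 r1 \<and> (\<forall>r\<in>?R. E y2 r \<longrightarrow> r = r1) \<and> (\<forall>r\<in>?R. E z2 r \<longrightarrow> r = r1)"
      then obtain r2 where b: "r2\<in>?R" "E y2 r2" "E z2 r2" "\<forall>r\<in>?R. E y2 r \<longrightarrow> r = r2" "\<forall>r\<in>?R. E z2 r \<longrightarrow> r = r2"
        by blast
      show ?thesis by (rule fl[OF BB[OF c(4) c(5) b(4) b(5)]])
    qed
  qed
next
  case no2: False
  show ?thesis
  proof (cases "\<exists>p\<in>N. \<exists>q\<in>N. E p q")
    case True
    then obtain p q where "p\<in>N" "q\<in>N" "E p q" by blast
    from core1[OF this no2] show ?thesis by auto
  next
    case False
    from core0[OF this] show ?thesis by auto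
  qed
qed

end


definition rmat :: "nat \<Rightarrow> (nat\<Rightarrow>nat\<Rightarrow>real) \<Rightarrow> complex mat" where
  "rmat n M = mat n n (\<lambda>(i,j). complex_of_real (M i j))"

definition am :: "(nat\<Rightarrow>nat\<Rightarrow>bool) \<Rightarrow> nat \<Rightarrow> nat \<Rightarrow> real" where
  "am E i j = (if E i j then 1 else 0)"

lemma adj_rmat: "adj_mat n E = rmat n (am E)"
  unfolding adj_mat_def rmat_def am_def by (rule eq_matI) auto

lemma rmat_carrier[simp]: "rmat n M \<in> carrier_mat n n"
  unfolding rmat_def by auto

lemma rmat_dim[simp]: "dim_row (rmat n M) = n" "dim_col (rmat n M) = n"
  unfolding rmat_def by auto

lemma rmat_mulvec:
  assumes "v \<in> carrier_vec n" "i < n"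
  shows "(rmat n M *\<^sub>v v) $ i = (\<Sum>j<n. complex_of_real (M i j) * v $ j)"
  using assms unfolding rmat_def
  by (simp add: index_mult_mat_vec row_def scalar_prod_def atLeast0LessThan)

fun mpow :: "nat \<Rightarrow> (nat\<Rightarrow>nat\<Rightarrow>real) \<Rightarrow> nat \<Rightarrow> nat \<Rightarrow> nat \<Rightarrow> real" where
  "mpow n M 0 i j = (if i = j then 1 else 0)"
| "mpow n M (Suc k) i j = (\<Sum>l<n. mpow n M k i l * M l j)"

lemma rmat_pow:
  assumes "i < n" "j < n"
  shows "(rmat n M ^\<^sub>m k) $$ (i,j) = complex_of_real (mpow n M k i j)"
  using assms
proof (induction k arbitrary: j)
  case 0
  then show ?case by simp
next
  case (Suc k)
  have "(rmat n M ^\<^sub>m Suc k) $$ (i,j) = (\<Sum>l<n. (rmat n M ^\<^sub>m k) $$ (i,l) * rmat n M $$ (l,j))"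
    using Suc.prems by (simp add: index_mult_mat row_def col_def scalar_prod_def atLeast0LessThan)
  also have "\<dots> = (\<Sum>l<n. complex_of_real (mpow n M k i l) * complex_of_real (M l j))"
    using Suc by (intro sum.cong) (auto simp: rmat_def)
  also have "\<dots> = complex_of_real (mpow n M (Suc k) i j)"
    by simp
  finally show ?case .
qed

lemma mpow_scale: "mpow n (\<lambda>i j. c * M i j) k i j = c^k * mpow n M k i j"
proof (induction k arbitrary: j)
  case 0 then show ?case by simp
next
  case (Suc k)
  have "mpow n (\<lambda>i j. c * M i j) (Suc k) i j = (\<Sum>l<n. c^k * mpow n M k i l * (c * M l j))"
    using Suc by simp
  also have "\<dots> = (\<Sum>l<n. c^Suc k * (mpow n M k i l * M l j))"
    by (intro sum.cong) (auto simp: algebra_simps)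
  also have "\<dots> = c^Suc k * mpow n M (Suc k) i j"
    by (simp add: sum_distrib_left)
  finally show ?case .
qed

lemma mpow_one: "i < n \<Longrightarrow> mpow n M (Suc 0) i j = M i j"
proof -
  assume i: "i < n"
  have "mpow n M (Suc 0) i j = (\<Sum>l<n. (if i = l then 1 else 0) * M l j)" by simp
  also have "\<dots> = (\<Sum>l<n. (if i = l then M l j else 0))"
    by (intro sum.cong) auto
  also have "\<dots> = M i j" using i by (simp add: sum.delta)
  finally show ?thesis .
qed

lemma mpow_add:
  assumes "j < n"
  shows "mpow n M (a + b) i j = (\<Sum>l<n. mpow n M a i l * mpow n M b l j)"
  using assms
proof (induction b arbitrary: j)
  case 0
  then show ?case by (simp add: if_distrib sum.delta' cong: if_cong)
next
  case (Suc b)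
  have "mpow n M (a + Suc b) i j = (\<Sum>m<n. mpow n M (a+b) i m * M m j)" by simp
  also have "\<dots> = (\<Sum>m<n. (\<Sum>l<n. mpow n M a i l * mpow n M b l m) * M m j)"
    using Suc.IH by (intro sum.cong) auto
  also have "\<dots> = (\<Sum>m<n. \<Sum>l<n. mpow n M a i l * (mpow n M b l m * M m j))"
    by (simp add: sum_distrib_right mult.assoc)
  also have "\<dots> = (\<Sum>l<n. \<Sum>m<n. mpow n M a i l * (mpow n M b l m * M m j))"
    by (rule sum.swap)
  also have "\<dots> = (\<Sum>l<n. mpow n M a i l * mpow n M (Suc b) l j)"
    by (simp add: sum_distrib_left)
  finally show ?case .
qed

lemma mpow_sym:
  assumes sym: "\<And>i j. M i j = M j i" and "i < n" "j < n"
  shows "mpow n M k i j = mpow n M k j i"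
  using assms(2,3)
proof (induction k arbitrary: i j)
  case 0 then show ?case by simp
next
  case (Suc k)
  have "mpow n M (Suc k) i j = (\<Sum>l<n. mpow n M k i l * M l j)" by simp
  also have "\<dots> = (\<Sum>l<n. M j l * mpow n M k l i)"
    using Suc sym by (intro sum.cong) (auto simp: mult.commute)
  also have "\<dots> = (\<Sum>l<n. mpow n M (Suc 0) j l * mpow n M k l i)"
    using Suc.prems mpow_one[of j n M] by (intro sum.cong) auto
  also have "\<dots> = mpow n M (Suc 0 + k) j i"
    using mpow_add[of i n M "Suc 0" k j] Suc.prems(1) by simp
  finally show ?case by simp
qed

lemma CS_sum:
  fixes a b :: "nat \<Rightarrow> real"
  shows "(\<Sum>i\<in>I. a i * b i)^2 \<le> (\<Sum>i\<in>I. (a i)^2) * (\<Sum>i\<in>I. (b i)^2)"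
proof (cases "(\<Sum>i\<in>I. (b i)^2) > 0")
  case False
  then have "(\<Sum>i\<in>I. (b i)^2) = 0" using sum_nonneg[of I "\<lambda>i. (b i)^2"] by force
  then have z: "\<forall>i\<in>I. b i = 0 \<or> infinite I"
    using sum_nonneg_eq_0_iff[of I "\<lambda>i. (b i)^2"] by auto
  show ?thesis
  proof (cases "finite I")
    case True
    then have "(\<Sum>i\<in>I. a i * b i) = 0" using z by (auto intro!: sum.neutral)
    then show ?thesis by (simp add: sum_nonneg mult_nonneg_nonneg)
  next
    case False then show ?thesis by simp
  qed
next
  case True
  define B where "B = (\<Sum>i\<in>I. (b i)^2)"
  define C where "C = (\<Sum>i\<in>I. a i * b i)"
  define A where "A = (\<Sum>i\<in>I. (a i)^2)"
  define r where "r = C / B"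
  have B: "B > 0" using True B_def by simp
  have "0 \<le> (\<Sum>i\<in>I. (a i - r * b i)^2)" by (simp add: sum_nonneg)
  also have "(\<Sum>i\<in>I. (a i - r * b i)^2) = (\<Sum>i\<in>I. (a i)^2 - 2 * r * (a i * b i) + r^2 * (b i)^2)"
    by (intro sum.cong) (auto simp: power2_eq_square algebra_simps)
  also have "\<dots> = A - 2 * r * C + r^2 * B"
    unfolding A_def B_def C_def by (simp add: sum.distrib sum_subtractf sum_distrib_left)
  also have "\<dots> = A - C^2 / B"
    unfolding r_def using B by (simp add: power2_eq_square field_simps)
  finally have "C^2 / B \<le> A" by simp
  then show ?thesis using B unfolding A_def B_def C_def by (simp add: pos_divide_le_eq)
qed


lemma rmat_eig_scale:
  assumes s: "s > 0" and ev: "eigenvalue (rmat n (\<lambda>i j. (1/s) * M i j)) \<nu>"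
  shows "eigenvalue (rmat n M) (complex_of_real s * \<nu>)"
proof -
  from ev obtain z where z: "eigenvector (rmat n (\<lambda>i j. (1/s) * M i j)) z \<nu>"
    unfolding eigenvalue_def by blast
  then have zc: "z \<in> carrier_vec n" and zn: "z \<noteq> 0\<^sub>v n"
    and ze: "rmat n (\<lambda>i j. (1/s) * M i j) *\<^sub>v z = \<nu> \<cdot>\<^sub>v z"
    unfolding eigenvector_def by auto
  have "rmat n M *\<^sub>v z = (complex_of_real s * \<nu>) \<cdot>\<^sub>v z"
  proof (rule eq_vecI)
    fix i assume i: "i < dim_vec ((complex_of_real s * \<nu>) \<cdot>\<^sub>v z)"
    then have i': "i < n" using zc by auto
    have "(rmat n M *\<^sub>v z) $ i = (\<Sum>j<n. complex_of_real (M i j) * z $ j)"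
      using rmat_mulvec[OF zc i'] .
    also have "\<dots> = complex_of_real s * (\<Sum>j<n. complex_of_real ((1/s) * M i j) * z $ j)"
      using s by (simp add: sum_distrib_left)
    also have "(\<Sum>j<n. complex_of_real ((1/s) * M i j) * z $ j) = (\<nu> \<cdot>\<^sub>v z) $ i"
      using rmat_mulvec[OF zc i', of "\<lambda>i j. (1/s) * M i j"] ze by simp
    also have "complex_of_real s * (\<nu> \<cdot>\<^sub>v z) $ i = ((complex_of_real s * \<nu>) \<cdot>\<^sub>v z) $ i"
      using i' zc by simp
    finally show "(rmat n M *\<^sub>v z) $ i = ((complex_of_real s * \<nu>) \<cdot>\<^sub>v z) $ i" .
  next
    show "dim_vec (rmat n M *\<^sub>v z) = dim_vec ((complex_of_real s * \<nu>) \<cdot>\<^sub>v z)" using zc by simp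
  qed
  then show ?thesis using zc zn unfolding eigenvalue_def eigenvector_def by auto
qed

lemma sr_nonneg:
  assumes "n > 0" shows "0 \<le> spectral_radius (rmat n M)"
proof -
  from spectral_radius_mem_max(1)[OF rmat_carrier[of n M] assms]
  obtain z where "spectral_radius (rmat n M) = cmod z" by auto
  then show ?thesis by simp
qed

lemma growth_bound:
  assumes n: "n > 0" and s: "s > spectral_radius (rmat n M)"
  shows "\<exists>c. \<forall>k i j. i < n \<longrightarrow> j < n \<longrightarrow> \<bar>mpow n M k i j\<bar> \<le> c * s^k"
proof -
  let ?\<rho> = "spectral_radius (rmat n M)"
  have s0: "s > 0" using s sr_nonneg[OF n, of M] by linarith
  let ?B = "rmat n (\<lambda>i j. (1/s) * M i j)"
  have le: "\<And>\<nu>. \<nu> \<in> spectrum ?B \<Longrightarrow> cmod \<nu> < 1"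
  proof -
    fix \<nu> assume "\<nu> \<in> spectrum ?B"
    then have "eigenvalue ?B \<nu>" unfolding spectrum_def by auto
    from rmat_eig_scale[OF s0 this] have "complex_of_real s * \<nu> \<in> spectrum (rmat n M)"
      unfolding spectrum_def by auto
    then have "cmod (complex_of_real s * \<nu>) \<le> ?\<rho>"
      using spectral_radius_mem_max(2)[OF rmat_carrier n] by blast
    then have "s * cmod \<nu> \<le> ?\<rho>" using s0 by (simp add: norm_mult)
    then have "s * cmod \<nu> < s * 1" using s by linarith
    then show "cmod \<nu> < 1" using s0 by (simp add: mult_less_cancel_left_pos)
  qed
  have "spectral_radius ?B < 1"
    using spectral_radius_mem_max(1)[OF rmat_carrier n, of "\<lambda>i j. (1/s) * M i j"] le by auto
  from spectral_radius_jnf_norm_bound_less_1_upper_triangular[OF rmat_carrier this]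
  obtain c where c: "\<And>k. norm_bound (?B ^\<^sub>m k) c" by blast
  have "\<forall>k i j. i < n \<longrightarrow> j < n \<longrightarrow> \<bar>mpow n M k i j\<bar> \<le> c * s^k"
  proof (intro allI impI)
    fix k i j assume ij: "i < n" "j < n"
    have "cmod ((?B ^\<^sub>m k) $$ (i,j)) \<le> c" using c[of k] ij unfolding norm_bound_def by auto
    moreover have "(?B ^\<^sub>m k) $$ (i,j) = complex_of_real ((1/s)^k * mpow n M k i j)"
      using rmat_pow[OF ij, of "\<lambda>i j. (1/s) * M i j" k] mpow_scale[of n "1/s" M k i j] by simp
    ultimately have "cmod (complex_of_real ((1/s)^k * mpow n M k i j)) \<le> c" by (simp only:)
    then have "\<bar>(1/s)^k * mpow n M k i j\<bar> \<le> c" by (simp only: norm_of_real)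
    then have "(1/s)^k * \<bar>mpow n M k i j\<bar> \<le> c" using s0 by (simp add: abs_mult)
    then have "\<bar>mpow n M k i j\<bar> \<le> c * s^k" using s0
      by (simp add: field_simps power_divide)
    then show "\<bar>mpow n M k i j\<bar> \<le> c * s^k" .
  qed
  then show ?thesis by blast
qed


locale symmat =
  fixes n :: nat and M :: "nat \<Rightarrow> nat \<Rightarrow> real"
  assumes npos: "n > 0" and msym: "\<And>i j. M i j = M j i" and mnn: "\<And>i j. 0 \<le> M i j"
begin

abbreviation "\<rho> \<equiv> spectral_radius (rmat n M)"

definition Q :: "(nat \<Rightarrow> real) \<Rightarrow> nat \<Rightarrow> real" where
  "Q y k = (\<Sum>i<n. \<Sum>j<n. y i * mpow n M k i j * y j)"

definition W :: "(nat \<Rightarrow> real) \<Rightarrow> nat \<Rightarrow> nat \<Rightarrow> real" where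
  "W y k l = (\<Sum>j<n. mpow n M k l j * y j)"

lemma Q_W: "Q y k = (\<Sum>i<n. y i * W y k i)"
  unfolding Q_def W_def by (simp add: sum_distrib_left mult.assoc)

lemma Q_double: "Q y (k + k) = (\<Sum>l<n. (W y k l)^2)"
proof -
  have "Q y (k+k) = (\<Sum>i<n. \<Sum>j<n. y i * (\<Sum>l<n. mpow n M k i l * mpow n M k l j) * y j)"
    unfolding Q_def by (intro sum.cong refl) (simp add: mpow_add)
  also have "\<dots> = (\<Sum>i<n. \<Sum>j<n. \<Sum>l<n. y i * mpow n M k i l * (mpow n M k l j * y j))"
    by (intro sum.cong refl) (simp add: sum_distrib_left sum_distrib_right ac_simps)
  also have "\<dots> = (\<Sum>i<n. \<Sum>l<n. \<Sum>j<n. y i * mpow n M k i l * (mpow n M k l j * y j))"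
    by (rule sum.cong[OF refl], rule sum.swap)
  also have "\<dots> = (\<Sum>l<n. \<Sum>i<n. \<Sum>j<n. y i * mpow n M k i l * (mpow n M k l j * y j))"
    by (rule sum.swap)
  also have "\<dots> = (\<Sum>l<n. (\<Sum>i<n. y i * mpow n M k i l) * W y k l)"
    unfolding W_def sum_product by (rule refl)
  also have "\<dots> = (\<Sum>l<n. W y k l * W y k l)"
  proof (intro sum.cong refl)
    fix l assume l: "l \<in> {..<n}"
    have "(\<Sum>i<n. y i * mpow n M k i l) = W y k l"
      unfolding W_def using l mpow_sym[OF msym, where n=n and k=k] by (intro sum.cong) (auto simp: mult.commute)
    then show "(\<Sum>i<n. y i * mpow n M k i l) * W y k l = W y k l * W y k l" by simp
  qed
  finally show ?thesis by (simp add: power2_eq_square)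
qed

lemma Q_sq: "(Q y k)^2 \<le> (\<Sum>i<n. (y i)^2) * Q y (k + k)"
  unfolding Q_double[of y k] Q_W[of y k] by (rule CS_sum)

lemma Q_one: "Q y (Suc 0) = (\<Sum>i<n. \<Sum>j<n. y i * M i j * y j)"
  unfolding Q_def by (intro sum.cong refl) (auto simp del: mpow.simps simp add: mpow_one)

lemma rho_nonneg: "0 \<le> \<rho>" using sr_nonneg[OF npos] .

lemma rayleigh: "(\<Sum>i<n. \<Sum>j<n. y i * M i j * y j) \<le> \<rho> * (\<Sum>i<n. (y i)^2)"
proof (rule ccontr)
  define q where "q = (\<Sum>i<n. \<Sum>j<n. y i * M i j * y j)"
  define Y where "Y = (\<Sum>i<n. (y i)^2)"
  assume "\<not> (\<Sum>i<n. \<Sum>j<n. y i * M i j * y j) \<le> \<rho> * (\<Sum>i<n. (y i)^2)"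
  then have qbig: "q > \<rho> * Y" unfolding q_def Y_def by simp
  have Y0: "Y \<ge> 0" unfolding Y_def by (simp add: sum_nonneg)
  have Ypos: "Y > 0"
  proof (rule ccontr)
    assume "\<not> Y > 0"
    then have "Y = 0" using Y0 by simp
    then have "\<forall>i\<in>{..<n}. (y i)^2 = 0" unfolding Y_def
      using sum_nonneg_eq_0_iff[of "{..<n}" "\<lambda>i. (y i)^2"] by simp
    then have "q = 0" unfolding q_def by simp
    then show False using qbig \<open>Y = 0\<close> by simp
  qed
  define \<tau> where "\<tau> = q / Y"
  have tau: "\<tau> > \<rho>" unfolding \<tau>_def using qbig Ypos by (simp add: field_simps)
  define s where "s = (\<rho> + \<tau>) / 2"
  have s1: "s > \<rho>" "s < \<tau>" unfolding s_def using tau by auto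
  have s0: "s > 0" using s1 rho_nonneg by linarith
  obtain c where c: "\<And>k i j. i < n \<Longrightarrow> j < n \<Longrightarrow> \<bar>mpow n M k i j\<bar> \<le> c * s^k"
    using growth_bound[OF npos s1(1)] by blast
  define K where "K = c * (\<Sum>i<n. \<bar>y i\<bar>)^2"
  have Qb: "Q y k \<le> K * s^k" for k
  proof -
    have "Q y k \<le> (\<Sum>i<n. \<Sum>j<n. \<bar>y i\<bar> * (c * s^k) * \<bar>y j\<bar>)"
      unfolding Q_def
    proof (intro sum_mono)
      fix i j assume "i \<in> {..<n}" "j \<in> {..<n}"
      then have b: "\<bar>mpow n M k i j\<bar> \<le> c * s^k" using c by auto
      have "y i * mpow n M k i j * y j \<le> \<bar>y i * mpow n M k i j * y j\<bar>" by simp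
      also have "\<dots> = \<bar>y i\<bar> * \<bar>mpow n M k i j\<bar> * \<bar>y j\<bar>" by (simp add: abs_mult)
      also have "\<dots> \<le> \<bar>y i\<bar> * (c * s^k) * \<bar>y j\<bar>"
        using b by (intro mult_right_mono mult_left_mono) auto
      finally show "y i * mpow n M k i j * y j \<le> \<bar>y i\<bar> * (c * s^k) * \<bar>y j\<bar>" .
    qed
    also have "\<dots> = K * s^k"
      unfolding K_def power2_eq_square by (simp add: sum_distrib_left sum_distrib_right algebra_simps)
    finally show ?thesis .
  qed
  have grow: "Q y (2^j) \<ge> Y * \<tau>^(2^j)" for j
  proof (induction j)
    case 0
    have "Q y (2^0) = q" using Q_one unfolding q_def by simp
    then show ?case unfolding \<tau>_def using Ypos by simp
  next
    case (Suc j)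
    have t0: "0 \<le> Y * \<tau>^(2^j)" using Y0 tau rho_nonneg by simp
    have "(Y * \<tau>^(2^j))^2 \<le> (Q y (2^j))^2"
      using Suc t0 by (intro power_mono) auto
    also have "\<dots> \<le> Y * Q y (2^j + 2^j)" using Q_sq unfolding Y_def .
    finally have "Y * (Y * \<tau>^(2^Suc j)) \<le> Y * Q y (2^Suc j)"
      by (simp add: power2_eq_square power_add algebra_simps mult_2)
    then show ?case using Ypos by simp
  qed
  define t where "t = \<tau> / s"
  have t1: "t > 1" unfolding t_def using s0 s1 by simp
  have bnd: "Y * t^(2^j) \<le> K" for j
  proof -
    have "Y * \<tau>^(2^j) \<le> K * s^(2^j)" using grow[of j] Qb[of "2^j"] by linarith
    then have "Y * \<tau>^(2^j) / s^(2^j) \<le> K" using s0 by (simp add: field_simps)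
    then show ?thesis unfolding t_def by (simp add: power_divide)
  qed
  obtain j :: nat where j: "real j > K / (Y * (t - 1))" using reals_Archimedean2 by blast
  have "1 + real (2^j) * (t - 1) \<le> (1 + (t - 1))^(2^j)"
    by (rule Bernoulli_inequality) (use t1 in simp)
  then have b1: "1 + real (2^j) * (t - 1) \<le> t^(2^j)" by simp
  have "real j \<le> real (2^j)" by (simp add: less_imp_le[OF less_exp])
  then have "real j * (t - 1) \<le> real (2^j) * (t - 1)" using t1 by (intro mult_right_mono) auto
  then have "Y * (real j * (t - 1)) \<le> Y * t^(2^j)" using b1 Ypos
    by (intro mult_left_mono) auto
  then have "Y * (real j * (t - 1)) \<le> K" using bnd[of j] by linarith
  moreover have "Y * (real j * (t - 1)) > K"
    using j Ypos t1 by (simp add: field_simps)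
  ultimately show False by linarith
qed

end


lemma eig_lower:
  assumes n: "n > 0" and nz: "\<exists>i<n. v i \<noteq> 0"
    and ev: "\<forall>i<n. (\<Sum>j<n. M i j * v j) = \<mu> * v i"
  shows "\<bar>\<mu>\<bar> \<le> spectral_radius (rmat n M)"
proof -
  define V where "V = vec n (\<lambda>i. complex_of_real (v i))"
  have Vc: "V \<in> carrier_vec n" unfolding V_def by simp
  have Vnz: "V \<noteq> 0\<^sub>v n"
  proof
    assume "V = 0\<^sub>v n"
    then have "\<forall>i<n. v i = 0" unfolding V_def by (metis index_vec index_zero_vec(1) of_real_eq_0_iff)
    then show False using nz by blast
  qed
  have "rmat n M *\<^sub>v V = complex_of_real \<mu> \<cdot>\<^sub>v V"
  proof (rule eq_vecI)
    fix i assume "i < dim_vec (complex_of_real \<mu> \<cdot>\<^sub>v V)"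
    then have i: "i < n" using Vc by simp
    have "(rmat n M *\<^sub>v V) $ i = (\<Sum>j<n. complex_of_real (M i j) * V $ j)" using rmat_mulvec[OF Vc i] .
    also have "\<dots> = (\<Sum>j<n. complex_of_real (M i j * v j))" unfolding V_def by (intro sum.cong) auto
    also have "\<dots> = complex_of_real (\<Sum>j<n. M i j * v j)" by simp
    also have "\<dots> = complex_of_real (\<mu> * v i)" using ev i by simp
    also have "\<dots> = (complex_of_real \<mu> \<cdot>\<^sub>v V) $ i" unfolding V_def using i by simp
    finally show "(rmat n M *\<^sub>v V) $ i = (complex_of_real \<mu> \<cdot>\<^sub>v V) $ i" .
  qed (use Vc in simp)
  then have "complex_of_real \<mu> \<in> spectrum (rmat n M)"
    unfolding spectrum_def eigenvalue_def eigenvector_def using Vc Vnz by auto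
  then have "cmod (complex_of_real \<mu>) \<le> spectral_radius (rmat n M)"
    using spectral_radius_mem_max(2)[OF rmat_carrier n] by blast
  then show ?thesis by simp
qed

context symmat begin

lemma expand_quad:
  fixes v :: "nat \<Rightarrow> real" and t :: real
  assumes i: "i < n"
  shows "(\<Sum>a<n. \<Sum>b<n. (v a + t * (if a = i then 1 else 0)) * M a b * (v b + t * (if b = i then 1 else 0)))
    = (\<Sum>a<n. \<Sum>b<n. v a * M a b * v b) + 2 * t * (\<Sum>b<n. M i b * v b) + t^2 * M i i"
proof -
  define d where "d = (\<lambda>a::nat. if a = i then (1::real) else 0)"
  have pt: "(v a + t * d a) * M a b * (v b + t * d b) =
      v a * M a b * v b + t * (d a * M a b * v b) + t * (v a * M a b * d b) + t^2 * (d a * M a b * d b)" for a b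
    by (simp add: algebra_simps power2_eq_square)
  have s1: "(\<Sum>a<n. \<Sum>b<n. d a * M a b * v b) = (\<Sum>b<n. M i b * v b)"
  proof -
    have "(\<Sum>a<n. \<Sum>b<n. d a * M a b * v b) = (\<Sum>a<n. if a = i then (\<Sum>b<n. M a b * v b) else 0)"
      unfolding d_def by (intro sum.cong refl) auto
    also have "\<dots> = (\<Sum>b<n. M i b * v b)" using i by (simp add: sum.delta')
    finally show ?thesis .
  qed
  have s2: "(\<Sum>a<n. \<Sum>b<n. v a * M a b * d b) = (\<Sum>b<n. M i b * v b)"
  proof -
    have "(\<Sum>a<n. \<Sum>b<n. v a * M a b * d b) = (\<Sum>a<n. v a * M a i)"
    proof (intro sum.cong refl)
      fix a
      have "(\<Sum>b<n. v a * M a b * d b) = (\<Sum>b<n. if b = i then v a * M a i else 0)"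
        unfolding d_def by (intro sum.cong refl) auto
      also have "\<dots> = v a * M a i" using i by (simp add: sum.delta')
      finally show "(\<Sum>b<n. v a * M a b * d b) = v a * M a i" .
    qed
    also have "\<dots> = (\<Sum>b<n. M i b * v b)" by (intro sum.cong refl) (simp add: msym[of _ i] mult.commute)
    finally show ?thesis .
  qed
  have s3: "(\<Sum>a<n. \<Sum>b<n. d a * M a b * d b) = M i i"
  proof -
    have "(\<Sum>a<n. \<Sum>b<n. d a * M a b * d b) = (\<Sum>a<n. if a = i then (\<Sum>b<n. M a b * d b) else 0)"
      unfolding d_def by (intro sum.cong refl) auto
    also have "\<dots> = (\<Sum>b<n. M i b * d b)" using i by (simp add: sum.delta')
    also have "\<dots> = (\<Sum>b<n. if b = i then M i i else 0)" unfolding d_def by (intro sum.cong refl) auto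
    also have "\<dots> = M i i" using i by (simp add: sum.delta')
    finally show ?thesis .
  qed
  have "(\<Sum>a<n. \<Sum>b<n. (v a + t * d a) * M a b * (v b + t * d b)) =
     (\<Sum>a<n. \<Sum>b<n. v a * M a b * v b) + t * (\<Sum>a<n. \<Sum>b<n. d a * M a b * v b)
     + t * (\<Sum>a<n. \<Sum>b<n. v a * M a b * d b) + t^2 * (\<Sum>a<n. \<Sum>b<n. d a * M a b * d b)"
    unfolding pt by (simp add: sum.distrib sum_distrib_left)
  then have main: "(\<Sum>a<n. \<Sum>b<n. (v a + t * d a) * M a b * (v b + t * d b))
    = (\<Sum>a<n. \<Sum>b<n. v a * M a b * v b) + 2 * t * (\<Sum>b<n. M i b * v b) + t^2 * M i i"
    unfolding s1 s2 s3 by simp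
  show ?thesis using main unfolding d_def .
qed

lemma expand_sq:
  fixes v :: "nat \<Rightarrow> real" and t :: real
  assumes i: "i < n"
  shows "(\<Sum>a<n. (v a + t * (if a = i then 1 else 0))^2) = (\<Sum>a<n. (v a)^2) + 2 * t * v i + t^2"
proof -
  have "(\<Sum>a<n. (v a + t * (if a = i then 1 else 0))^2) =
        (\<Sum>a<n. (v a)^2 + (if a = i then 2 * t * v i + t^2 else 0))"
    by (intro sum.cong refl) (auto simp: power2_eq_square algebra_simps)
  also have "\<dots> = (\<Sum>a<n. (v a)^2) + (2 * t * v i + t^2)"
    using i by (simp add: sum.distrib sum.delta')
  finally show ?thesis by simp
qed

lemma perron:
  "\<exists>v. (\<forall>i. 0 \<le> v i) \<and> (\<exists>i<n. v i \<noteq> 0) \<and> (\<forall>i<n. (\<Sum>j<n. M i j * v j) = \<rho> * v i)"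
proof -
  from spectral_radius_mem_max(1)[OF rmat_carrier[of n M] npos]
  obtain \<nu> where nu: "\<nu> \<in> spectrum (rmat n M)" "\<rho> = cmod \<nu>" by auto
  then obtain z where "eigenvector (rmat n M) z \<nu>" unfolding spectrum_def eigenvalue_def by auto
  then have zc: "z \<in> carrier_vec n" and zn: "z \<noteq> 0\<^sub>v n" and ze: "rmat n M *\<^sub>v z = \<nu> \<cdot>\<^sub>v z"
    unfolding eigenvector_def by auto
  define v where "v = (\<lambda>i. if i < n then cmod (z $ i) else 0)"
  have v0: "\<forall>i. 0 \<le> v i" unfolding v_def by simp
  have vnz: "\<exists>i<n. v i \<noteq> 0"
  proof (rule ccontr)
    assume "\<not> (\<exists>i<n. v i \<noteq> 0)"
    then have "\<forall>i<n. z $ i = 0" unfolding v_def by auto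
    then have "z = 0\<^sub>v n" using zc by (intro eq_vecI) auto
    then show False using zn by simp
  qed
  define D where "D = (\<lambda>i. (\<Sum>j<n. M i j * v j) - \<rho> * v i)"
  have Dnn: "\<forall>i<n. 0 \<le> D i"
  proof (intro allI impI)
    fix i assume i: "i < n"
    have "\<nu> * z $ i = (\<Sum>j<n. complex_of_real (M i j) * z $ j)"
      using rmat_mulvec[OF zc i, of M] ze zc i by simp
    then have "cmod (\<nu> * z $ i) = cmod (\<Sum>j<n. complex_of_real (M i j) * z $ j)" by simp
    then have "\<rho> * v i = cmod (\<Sum>j<n. complex_of_real (M i j) * z $ j)"
      using nu(2) i unfolding v_def by (simp only: norm_mult if_True)
    also have "\<dots> \<le> (\<Sum>j<n. cmod (complex_of_real (M i j) * z $ j))" by (rule norm_sum)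
    also have "\<dots> = (\<Sum>j<n. M i j * v j)"
      unfolding v_def by (intro sum.cong refl) (auto simp: norm_mult mnn)
    finally show "0 \<le> D i" unfolding D_def by simp
  qed
  define f where "f = (\<lambda>y. (\<Sum>a<n. \<Sum>b<n. y a * M a b * y b) - \<rho> * (\<Sum>a<n. (y a)^2))"
  have fle: "f y \<le> 0" for y unfolding f_def using rayleigh[of y] by simp
  have fv: "f v = (\<Sum>a<n. v a * D a)"
  proof -
    have "(\<Sum>a<n. \<Sum>b<n. v a * M a b * v b) = (\<Sum>a<n. v a * (\<Sum>b<n. M a b * v b))"
      by (simp add: sum_distrib_left mult.assoc)
    then show ?thesis unfolding f_def D_def
      by (simp add: algebra_simps sum_subtractf sum_distrib_left power2_eq_square)
  qed
  have fv0: "f v = 0"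
  proof -
    have "0 \<le> (\<Sum>a<n. v a * D a)" using v0 Dnn by (intro sum_nonneg) auto
    then show ?thesis using fle[of v] fv by simp
  qed
  have D0: "\<forall>i<n. D i = 0"
  proof (intro allI impI, rule ccontr)
    fix i assume i: "i < n" and "D i \<noteq> 0"
    then have Dp: "D i > 0" using Dnn by force
    define e where "e = M i i - \<rho>"
    define c where "c = \<bar>e\<bar> + 1"
    define t where "t = D i / c"
    have c1: "c \<ge> 1" unfolding c_def by simp
    have tp: "t > 0" unfolding t_def using Dp c1 by simp
    have tc: "t * (c - 1) \<le> D i"
    proof -
      have "t * (c - 1) = D i * ((c - 1) / c)" unfolding t_def by simp
      also have "\<dots> \<le> D i * 1" using Dp c1 by (intro mult_left_mono) auto
      finally show ?thesis by simp
    qed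
    have "e \<ge> - (c - 1)" unfolding c_def by simp
    then have "t * e \<ge> - (t * (c - 1))" using tp by (simp add: mult_left_mono_neg) (smt (verit) mult_minus_right mult_le_cancel_left_pos)
    then have pos: "2 * D i + t * e > 0" using tc Dp by linarith
    define y where "y = (\<lambda>a. v a + t * (if a = i then 1 else 0))"
    have "f y = f v + 2 * t * D i + t^2 * e"
      unfolding f_def y_def expand_quad[OF i] expand_sq[OF i] D_def e_def
      by (simp add: algebra_simps power2_eq_square)
    then have "f y = t * (2 * D i + t * e)" using fv0 by (simp add: algebra_simps power2_eq_square)
    moreover have "t * (2 * D i + t * e) > 0" using tp pos by simp
    ultimately show False using fle[of y] by simp
  qed
  show ?thesis
    using v0 vnz D0 unfolding D_def by (intro exI[of _ v]) auto
qed

end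


lemma fe_cases:
  assumes "friendship_edge 3 i j"
  shows "i < 7 \<and> j < 7 \<and> (i = 0 \<and> j \<noteq> 0 \<or> j = 0 \<and> i \<noteq> 0 \<or>
     (i = 1 \<and> j = 2) \<or> (i = 2 \<and> j = 1) \<or> (i = 3 \<and> j = 4) \<or> (i = 4 \<and> j = 3) \<or>
     (i = 5 \<and> j = 6) \<or> (i = 6 \<and> j = 5))"
proof -
  have b: "i \<le> 6" "j \<le> 6" "i \<noteq> j" using assms unfolding friendship_edge_def by auto
  have "i = 0 \<or> j = 0 \<or> (\<exists>t. 1 \<le> t \<and> t \<le> 3 \<and> {i, j} = {2*t - 1, 2*t})"
    using assms unfolding friendship_edge_def by auto
  moreover have "(\<exists>t. 1 \<le> t \<and> t \<le> 3 \<and> {i, j} = {2*t - 1, 2*t}) \<Longrightarrow>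
     (i = 1 \<and> j = 2) \<or> (i = 2 \<and> j = 1) \<or> (i = 3 \<and> j = 4) \<or> (i = 4 \<and> j = 3) \<or>
     (i = 5 \<and> j = 6) \<or> (i = 6 \<and> j = 5)"
  proof -
    assume "\<exists>t. 1 \<le> t \<and> t \<le> 3 \<and> {i, j} = {2*t - 1, 2*t}"
    then obtain t where t: "1 \<le> t" "t \<le> 3" "{i, j} = {2*t - 1, 2*t}" by blast
    then have "t = 1 \<or> t = 2 \<or> t = 3" by auto
    then show ?thesis using t(3) by (auto simp: doubleton_eq_iff)
  qed
  ultimately show ?thesis using b by auto
qed

lemma F3_contra:
  assumes ff: "F_free 3 n E" and sym: "\<forall>i j. E i j \<longrightarrow> E j i"
    and dist: "distinct [c,p1,q1,p2,q2,p3,q3]"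
    and lt: "c < n" "p1 < n" "q1 < n" "p2 < n" "q2 < n" "p3 < n" "q3 < n"
    and e: "E c p1" "E c q1" "E p1 q1" "E c p2" "E c q2" "E p2 q2" "E c p3" "E c q3" "E p3 q3"
  shows False
proof -
  define L where "L = [c,p1,q1,p2,q2,p3,q3]"
  define f where "f = (\<lambda>i. L ! i)"
  have inj: "inj_on f {..<2*3+1}"
    unfolding f_def using dist unfolding L_def[symmetric]
    by (intro inj_onI) (simp add: L_def nth_eq_iff_index_eq)
  have img: "f ` {..<2*3+1} \<subseteq> {..<n}"
  proof
    fix y assume "y \<in> f ` {..<2*3+1}"
    then obtain i where i: "i < 7" "y = L ! i" unfolding f_def by auto
    then have "i = 0 \<or> i = 1 \<or> i = 2 \<or> i = 3 \<or> i = 4 \<or> i = 5 \<or> i = 6" by auto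
    then show "y \<in> {..<n}" using i lt unfolding L_def by auto
  qed
  have es: "E p1 c" "E q1 c" "E q1 p1" "E p2 c" "E q2 c" "E q2 p2" "E p3 c" "E q3 c" "E q3 p3"
    using e sym by blast+
  have edges: "\<forall>i<2*3+1. \<forall>j<2*3+1. friendship_edge 3 i j \<longrightarrow> E (f i) (f j)"
  proof (intro allI impI)
    fix i j assume "i < 2*3+1" "j < 2*3+1" and fe: "friendship_edge 3 i j"
    from fe_cases[OF fe] have c: "i < 7" "j < 7" "i = 0 \<and> j \<noteq> 0 \<or> j = 0 \<and> i \<noteq> 0 \<or>
     (i = 1 \<and> j = 2) \<or> (i = 2 \<and> j = 1) \<or> (i = 3 \<and> j = 4) \<or> (i = 4 \<and> j = 3) \<or>
     (i = 5 \<and> j = 6) \<or> (i = 6 \<and> j = 5)" by auto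
    have i7: "i = 0 \<or> i = 1 \<or> i = 2 \<or> i = 3 \<or> i = 4 \<or> i = 5 \<or> i = 6" using c(1) by auto
    have j7: "j = 0 \<or> j = 1 \<or> j = 2 \<or> j = 3 \<or> j = 4 \<or> j = 5 \<or> j = 6" using c(2) by auto
    have fv: "f 0 = c" "f 1 = p1" "f 2 = q1" "f 3 = p2" "f 4 = q2" "f 5 = p3" "f 6 = q3"
      unfolding f_def L_def by simp_all
    from c(3) show "E (f i) (f j)"
    proof (elim disjE)
      assume "i = 0 \<and> j \<noteq> 0" then show ?thesis using j7 fv e by auto
    next
      assume "j = 0 \<and> i \<noteq> 0" then show ?thesis using i7 fv es by auto
    qed (use fv e es in auto)
  qed
  have "contains_subgraph n E (2*3+1) (friendship_edge 3)"
    unfolding contains_subgraph_def using inj img edges by blast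
  then show False using ff unfolding F_free_def by simp
qed

locale sgraph =
  fixes n :: nat and E :: "nat \<Rightarrow> nat \<Rightarrow> bool"
  assumes sg: "simple_graph n E"
begin

lemma Ein: "E i j \<Longrightarrow> i < n \<and> j < n" using sg unfolding simple_graph_def by blast
lemma Esym: "E i j \<Longrightarrow> E j i" using sg unfolding simple_graph_def by blast
lemma Esym': "\<forall>i j. E i j \<longrightarrow> E j i" using Esym by blast
lemma Eirr: "\<not> E i i" using sg unfolding simple_graph_def by blast
lemma Eirr': "\<forall>i. \<not> E i i" using Eirr by blast

lemma am_sym: "am E i j = am E j i" unfolding am_def using Esym by auto
lemma am_nn: "0 \<le> am E i j" unfolding am_def by auto

lemma symmat: "n > 0 \<Longrightarrow> symmat n (am E)"
  by unfold_locales (auto simp: am_sym am_nn)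

lemma rho_eq: "graph_spectral_radius n E = spectral_radius (rmat n (am E))"
  unfolding graph_spectral_radius_def adj_rmat ..

definition P :: "(nat \<times> nat) set" where "P = {(i,j). i < n \<and> j < n \<and> E i j}"
definition Sx :: "nat set set" where "Sx = {{i, j} | i j. i < n \<and> j < n \<and> E i j}"

lemma num_Sx: "num_edges n E = card Sx" unfolding num_edges_def Sx_def ..

lemma finP: "finite P" unfolding P_def by (rule finite_subset[of _ "{..<n} \<times> {..<n}"]) auto

lemma card_P: "card P = 2 * card Sx"
proof -
  define P1 where "P1 = {(i,j). i < n \<and> j < n \<and> E i j \<and> i < j}"
  define P2 where "P2 = {(i,j). i < n \<and> j < n \<and> E i j \<and> j < i}"
  have lt: "\<And>i j. E i j \<Longrightarrow> i < j \<or> j < i" using Eirr by (metis linorder_neqE_nat)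
  have PU: "P = P1 \<union> P2" unfolding P_def P1_def P2_def using lt by auto
  have fin1: "finite P1" "finite P2" using finP PU by auto
  have disj: "P1 \<inter> P2 = {}" unfolding P1_def P2_def by auto
  have c12: "card P2 = card P1"
  proof -
    have "bij_betw (\<lambda>(i,j). (j,i)) P1 P2"
      unfolding bij_betw_def inj_on_def P1_def P2_def
      by (auto simp: image_def Esym intro!: exI[of _ "(_,_)"])
    then show ?thesis by (simp add: bij_betw_same_card)
  qed
  have c1S: "card P1 = card Sx"
  proof -
    have "bij_betw (\<lambda>(i,j). {i,j}) P1 Sx"
    proof (unfold bij_betw_def, intro conjI)
      show "inj_on (\<lambda>(i,j). {i,j}) P1"
        unfolding inj_on_def P1_def by (auto simp: doubleton_eq_iff)
      show "(\<lambda>(i,j). {i,j}) ` P1 = Sx"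
      proof
        show "(\<lambda>(i,j). {i,j}) ` P1 \<subseteq> Sx" unfolding P1_def Sx_def by auto
        show "Sx \<subseteq> (\<lambda>(i,j). {i,j}) ` P1"
        proof
          fix s assume "s \<in> Sx"
          then obtain i j where s: "s = {i,j}" "i < n" "j < n" "E i j" unfolding Sx_def by auto
          have "i \<noteq> j" using s(4) Eirr by auto
          then show "s \<in> (\<lambda>(i,j). {i,j}) ` P1"
          proof (cases "i < j")
            case True
            then have "(i,j) \<in> P1" unfolding P1_def using s by auto
            then show ?thesis using s by force
          next
            case False
            then have "(j,i) \<in> P1" unfolding P1_def using s \<open>i \<noteq> j\<close> Esym by auto
            then show ?thesis using s by (force simp: insert_commute)
          qed
        qed
      qed
    qed
    then show ?thesis by (simp add: bij_betw_same_card)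
  qed
  have "card P = card P1 + card P2" unfolding PU using card_Un_disjoint[OF fin1 disj] .
  then show ?thesis using c12 c1S by simp
qed

lemma sum_am: "(\<Sum>i<n. \<Sum>j<n. am E i j) = real (card P)"
proof -
  have "(\<Sum>i<n. \<Sum>j<n. am E i j) = (\<Sum>(i,j)\<in>{..<n} \<times> {..<n}. am E i j)"
    by (simp add: sum.cartesian_product)
  also have "\<dots> = (\<Sum>p\<in>{..<n} \<times> {..<n}. if p \<in> P then 1 else 0)"
    unfolding am_def P_def by (intro sum.cong) (auto split: if_splits)
  also have "\<dots> = real (card ({..<n} \<times> {..<n} \<inter> P))"
    by (simp add: sum.If_cases)
  also have "{..<n} \<times> {..<n} \<inter> P = P" unfolding P_def by auto
  finally show ?thesis .
qed

lemma handshake: "(\<Sum>i<n. \<Sum>j<n. am E i j) = 2 * real (num_edges n E)"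
  using sum_am card_P num_Sx by simp

end


context sgraph begin

lemma no3_nbhd:
  assumes ff: "F_free 3 n E" and u: "u < n"
  shows "no3 {v. v < n \<and> E u v} E"
  unfolding no3_def
proof
  assume "\<exists>a1 b1 a2 b2 a3 b3. a1 \<in> {v. v < n \<and> E u v} \<and> b1 \<in> {v. v < n \<and> E u v} \<and>
      a2 \<in> {v. v < n \<and> E u v} \<and> b2 \<in> {v. v < n \<and> E u v} \<and> a3 \<in> {v. v < n \<and> E u v} \<and>
      b3 \<in> {v. v < n \<and> E u v} \<and> distinct [a1, b1, a2, b2, a3, b3] \<and> E a1 b1 \<and> E a2 b2 \<and> E a3 b3"
  then obtain a1 b1 a2 b2 a3 b3 where m: "a1 < n" "E u a1" "b1 < n" "E u b1" "a2 < n" "E u a2"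
    "b2 < n" "E u b2" "a3 < n" "E u a3" "b3 < n" "E u b3" and d: "distinct [a1, b1, a2, b2, a3, b3]"
    and e: "E a1 b1" "E a2 b2" "E a3 b3" by auto
  have "u \<noteq> a1" "u \<noteq> b1" "u \<noteq> a2" "u \<noteq> b2" "u \<noteq> a3" "u \<noteq> b3" using m Eirr by auto
  then have "distinct [u, a1, b1, a2, b2, a3, b3]" using d by auto
  then show False using F3_contra[OF ff Esym'] m e u by blast
qed

lemma split3:
  assumes u: "u < n"
  shows "(\<Sum>j<n. f j) = f u + (\<Sum>j\<in>{v. v < n \<and> E u v}. f j) + (\<Sum>j\<in>{w. w < n \<and> w \<noteq> u \<and> \<not> E u w}. f j)"
proof -
  let ?N = "{v. v < n \<and> E u v}" and ?B = "{w. w < n \<and> w \<noteq> u \<and> \<not> E u w}"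
  have eq: "{..<n} = insert u (?N \<union> ?B)" using u by auto
  have fin: "finite (?N \<union> ?B)" by (rule finite_subset[of _ "{..<n}"]) auto
  have nu: "u \<notin> ?N \<union> ?B" using Eirr by auto
  have "(\<Sum>j<n. f j) = f u + (\<Sum>j\<in>?N \<union> ?B. f j)" unfolding eq using sum.insert[OF fin nu] by simp
  also have "(\<Sum>j\<in>?N \<union> ?B. f j) = (\<Sum>j\<in>?N. f j) + (\<Sum>j\<in>?B. f j)"
    by (rule sum.union_disjoint) (auto intro: finite_subset[of _ "{..<n}"])
  finally show ?thesis by (simp add: add.assoc)
qed

lemma at_max:
  assumes ff: "F_free 3 n E" and u: "u < n"
    and x01: "\<forall>i<n. 0 \<le> x i \<and> x i \<le> 1" and xu: "x u = 1"
    and eig: "\<forall>i<n. (\<Sum>j<n. am E i j * x j) = r * x i"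
    and rbig: "r > 13/2"
  shows "r^2 - 2*r \<le> real (num_edges n E) - 3 \<and>
    (r^2 - 2*r = real (num_edges n E) - 3 \<longrightarrow>
      book {v. v < n \<and> E u v} E x \<and>
      (\<forall>v w. v < n \<longrightarrow> E u v \<longrightarrow> w < n \<longrightarrow> w \<noteq> u \<longrightarrow> \<not> E u w \<longrightarrow> E v w \<longrightarrow> x w = 1) \<and>
      (\<forall>v w. v < n \<longrightarrow> v \<noteq> u \<longrightarrow> \<not> E u v \<longrightarrow> w < n \<longrightarrow> w \<noteq> u \<longrightarrow> \<not> E u w \<longrightarrow> \<not> E v w))"
proof -
  define N where "N = {v. v < n \<and> E u v}"
  define B where "B = {w. w < n \<and> w \<noteq> u \<and> \<not> E u w}"
  define a where "a = am E"
  define m where "m = real (num_edges n E)"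
  have sp: "\<And>f. (\<Sum>j<n. f j) = f u + (\<Sum>j\<in>N. f j) + (\<Sum>j\<in>B. f j)"
    unfolding N_def B_def using split3[OF u] by blast
  have finN: "finite N" unfolding N_def by (rule finite_subset[of _ "{..<n}"]) auto
  have finB: "finite B" unfolding B_def by (rule finite_subset[of _ "{..<n}"]) auto
  have Nlt: "\<And>v. v \<in> N \<Longrightarrow> v < n" unfolding N_def by auto
  have Blt: "\<And>v. v \<in> B \<Longrightarrow> v < n" unfolding B_def by auto
  have auN: "\<And>v. v \<in> N \<Longrightarrow> a u v = 1" "\<And>v. v \<in> N \<Longrightarrow> a v u = 1"
    unfolding N_def a_def am_def using Esym by auto
  have auB: "\<And>v. v \<in> B \<Longrightarrow> a u v = 0" "\<And>v. v \<in> B \<Longrightarrow> a v u = 0"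
    unfolding B_def a_def am_def using Esym by auto
  have auu: "a u u = 0" unfolding a_def am_def using Eirr by simp
  have asym: "\<And>i j. a i j = a j i" unfolding a_def using am_sym by simp
  have ann: "\<And>i j. 0 \<le> a i j" unfolding a_def using am_nn by simp
  have xN: "\<And>v. v \<in> N \<Longrightarrow> 0 \<le> x v \<and> x v \<le> 1" using x01 Nlt by auto
  have xB: "\<And>v. v \<in> B \<Longrightarrow> 0 \<le> x v \<and> x v \<le> 1" using x01 Blt by auto
  define X where "X = (\<Sum>v\<in>N. x v)"
  have rX: "r = X"
  proof -
    have "r = (\<Sum>j<n. a u j * x j)" using eig u xu unfolding a_def by simp
    also have "\<dots> = a u u * x u + (\<Sum>j\<in>N. a u j * x j) + (\<Sum>j\<in>B. a u j * x j)" by (rule sp)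
    also have "(\<Sum>j\<in>N. a u j * x j) = X" unfolding X_def using auN by (intro sum.cong) auto
    also have "(\<Sum>j\<in>B. a u j * x j) = 0" using auB by (intro sum.neutral) auto
    finally show ?thesis using auu by simp
  qed
  define d where "d = real (card N)"
  define A1 where "A1 = (\<Sum>v\<in>N. \<Sum>w\<in>N. a v w * x w)"
  define A2 where "A2 = (\<Sum>v\<in>N. \<Sum>w\<in>B. a v w * x w)"
  define SNN where "SNN = (\<Sum>v\<in>N. \<Sum>w\<in>N. a v w)"
  define SNB where "SNB = (\<Sum>v\<in>N. \<Sum>w\<in>B. a v w)"
  define SBB where "SBB = (\<Sum>v\<in>B. \<Sum>w\<in>B. a v w)"
  have rowN: "(\<Sum>j<n. a v j * x j) = 1 + (\<Sum>w\<in>N. a v w * x w) + (\<Sum>w\<in>B. a v w * x w)"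
    if v: "v \<in> N" for v
  proof -
    have "(\<Sum>j<n. a v j * x j) = a v u * x u + (\<Sum>w\<in>N. a v w * x w) + (\<Sum>w\<in>B. a v w * x w)"
      by (rule sp)
    then show ?thesis using auN(2)[OF v] xu by simp
  qed
  have r2: "r^2 = d + A1 + A2"
  proof -
    have "r^2 = (\<Sum>v\<in>N. r * x v)" unfolding power2_eq_square using rX X_def by (simp add: sum_distrib_left)
    also have "\<dots> = (\<Sum>v\<in>N. (\<Sum>j<n. a v j * x j))" using eig Nlt unfolding a_def by (intro sum.cong) auto
    also have "\<dots> = (\<Sum>v\<in>N. 1 + (\<Sum>w\<in>N. a v w * x w) + (\<Sum>w\<in>B. a v w * x w))"
      using rowN by (intro sum.cong) auto
    also have "\<dots> = d + A1 + A2" unfolding d_def A1_def A2_def by (simp add: sum.distrib)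
    finally show ?thesis .
  qed
  have swapNB: "(\<Sum>v\<in>B. \<Sum>w\<in>N. a v w) = SNB"
    unfolding SNB_def by (subst sum.swap) (simp add: asym)
  have m2: "2 * m = 2 * d + SNN + 2 * SNB + SBB"
  proof -
    have "2 * m = (\<Sum>i<n. \<Sum>j<n. a i j)" unfolding m_def a_def using handshake by simp
    also have "\<dots> = (\<Sum>j<n. a u j) + (\<Sum>i\<in>N. \<Sum>j<n. a i j) + (\<Sum>i\<in>B. \<Sum>j<n. a i j)" by (rule sp)
    also have "(\<Sum>j<n. a u j) = d"
    proof -
      have "(\<Sum>j<n. a u j) = a u u + (\<Sum>j\<in>N. a u j) + (\<Sum>j\<in>B. a u j)" by (rule sp)
      also have "(\<Sum>j\<in>N. a u j) = d" unfolding d_def using auN by simp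
      also have "(\<Sum>j\<in>B. a u j) = 0" using auB by simp
      finally show ?thesis using auu by simp
    qed
    also have "(\<Sum>i\<in>N. \<Sum>j<n. a i j) = (\<Sum>i\<in>N. 1 + (\<Sum>w\<in>N. a i w) + (\<Sum>w\<in>B. a i w))"
    proof (intro sum.cong refl)
      fix i assume i: "i \<in> N"
      have "(\<Sum>j<n. a i j) = a i u + (\<Sum>w\<in>N. a i w) + (\<Sum>w\<in>B. a i w)" by (rule sp)
      then show "(\<Sum>j<n. a i j) = 1 + (\<Sum>w\<in>N. a i w) + (\<Sum>w\<in>B. a i w)" using auN(2)[OF i] by simp
    qed
    also have "\<dots> = d + SNN + SNB" unfolding d_def SNN_def SNB_def by (simp add: sum.distrib)
    also have "(\<Sum>i\<in>B. \<Sum>j<n. a i j) = (\<Sum>i\<in>B. (\<Sum>w\<in>N. a i w) + (\<Sum>w\<in>B. a i w))"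
    proof (intro sum.cong refl)
      fix i assume i: "i \<in> B"
      have "(\<Sum>j<n. a i j) = a i u + (\<Sum>w\<in>N. a i w) + (\<Sum>w\<in>B. a i w)" by (rule sp)
      then show "(\<Sum>j<n. a i j) = (\<Sum>w\<in>N. a i w) + (\<Sum>w\<in>B. a i w)" using auB(2)[OF i] by simp
    qed
    also have "\<dots> = SNB + SBB" unfolding SBB_def using swapNB by (simp add: sum.distrib)
    finally show ?thesis by simp
  qed
  define G where "G = (\<Sum>v\<in>N. \<Sum>w\<in>N. gg E x v w)"
  have GA: "G = 2 * A1 - SNN"
  proof -
    have g: "\<And>v w. gg E x v w = a v w * x v + a v w * x w - a v w"
      unfolding gg_def a_def am_def by auto
    have sw: "(\<Sum>v\<in>N. \<Sum>w\<in>N. a v w * x v) = A1"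
      unfolding A1_def by (subst sum.swap) (simp add: asym)
    have "G = (\<Sum>v\<in>N. \<Sum>w\<in>N. a v w * x v) + A1 - SNN"
      unfolding G_def g A1_def SNN_def by (simp add: sum.distrib sum_subtractf)
    then show ?thesis using sw by simp
  qed
  have slack: "SNB - A2 = (\<Sum>v\<in>N. \<Sum>w\<in>B. a v w * (1 - x w))"
    unfolding SNB_def A2_def by (simp add: sum_subtractf algebra_simps)
  have slack0: "0 \<le> (\<Sum>v\<in>N. \<Sum>w\<in>B. a v w * (1 - x w))"
    using ann xB by (intro sum_nonneg mult_nonneg_nonneg) auto
  have SBB0: "0 \<le> SBB" unfolding SBB_def using ann by (intro sum_nonneg) auto
  have ident: "r^2 - 2*r - (m - 3) = G/2 - 2*X + 3 - (SNB - A2) - SBB/2"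
    using r2 m2 GA rX by (simp add: field_simps)
  interpret ml: mlctx N E x
  proof
    show "finite N" by (rule finN)
    show "\<forall>i j. E i j \<longrightarrow> E j i" by (rule Esym')
    show "\<forall>i. \<not> E i i" by (rule Eirr')
    show "no3 N E" unfolding N_def by (rule no3_nbhd[OF ff u])
    show "\<forall>v\<in>N. 0 \<le> x v" using xN by auto
    show "\<forall>v\<in>N. x v \<le> 1" using xN by auto
    show "sum x N > 13/2" using rX rbig X_def by simp
  qed
  have mlres: "G \<le> 4 * X - 6 \<and> ((\<forall>v\<in>N. 0 < x v) \<longrightarrow> G = 4 * X - 6 \<longrightarrow> book N E x)"
    using ml.mlmain unfolding G_def X_def .
  have le: "r^2 - 2*r \<le> m - 3" using ident mlres slack slack0 SBB0 by linarith
  moreover have "r^2 - 2*r = m - 3 \<longrightarrow>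
      book N E x \<and>
      (\<forall>v w. v < n \<longrightarrow> E u v \<longrightarrow> w < n \<longrightarrow> w \<noteq> u \<longrightarrow> \<not> E u w \<longrightarrow> E v w \<longrightarrow> x w = 1) \<and>
      (\<forall>v w. v < n \<longrightarrow> v \<noteq> u \<longrightarrow> \<not> E u v \<longrightarrow> w < n \<longrightarrow> w \<noteq> u \<longrightarrow> \<not> E u w \<longrightarrow> \<not> E v w)"
  proof (intro impI)
    assume eq: "r^2 - 2*r = m - 3"
    have Geq: "G = 4 * X - 6" and s0: "SNB - A2 = 0" and b0: "SBB = 0"
      using ident mlres slack slack0 SBB0 eq by linarith+
    have pos: "\<forall>v\<in>N. 0 < x v"
    proof
      fix v assume v: "v \<in> N"
      have "0 \<le> (\<Sum>w\<in>N. a v w * x w)" using ann xN by (intro sum_nonneg mult_nonneg_nonneg) auto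
      moreover have "0 \<le> (\<Sum>w\<in>B. a v w * x w)" using ann xB by (intro sum_nonneg mult_nonneg_nonneg) auto
      ultimately have "r * x v \<ge> 1" using rowN[OF v] eig Nlt[OF v] unfolding a_def by simp
      then show "0 < x v" using rbig xN[OF v] by (cases "x v = 0") auto
    qed
    have bk: "book N E x" using mlres Geq pos by blast
    have z1: "\<forall>v\<in>N. \<forall>w\<in>B. a v w * (1 - x w) = 0"
    proof -
      have nn: "\<And>v w. w \<in> B \<Longrightarrow> 0 \<le> a v w * (1 - x w)"
        using ann xB by (simp add: mult_nonneg_nonneg)
      have "\<forall>v\<in>N. (\<Sum>w\<in>B. a v w * (1 - x w)) = 0"
        using sum_nonneg_eq_0_iff[OF finN, of "\<lambda>v. \<Sum>w\<in>B. a v w * (1 - x w)"] s0 slack nn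
        by (simp add: sum_nonneg)
      then show ?thesis
      proof (intro ballI)
        fix v w assume h: "\<forall>v\<in>N. (\<Sum>w\<in>B. a v w * (1 - x w)) = 0" and v: "v \<in> N" and w: "w \<in> B"
        have "(\<Sum>w\<in>B. a v w * (1 - x w)) = 0" using h v by blast
        then have "\<forall>w\<in>B. a v w * (1 - x w) = 0"
          using sum_nonneg_eq_0_iff[OF finB, of "\<lambda>w. a v w * (1 - x w)"] nn by simp
        then show "a v w * (1 - x w) = 0" using w by blast
      qed
    qed
    have z2: "\<forall>v\<in>B. \<forall>w\<in>B. a v w = 0"
    proof -
      have "\<forall>v\<in>B. (\<Sum>w\<in>B. a v w) = 0"
        using sum_nonneg_eq_0_iff[OF finB, of "\<lambda>v. \<Sum>w\<in>B. a v w"] b0 ann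
        unfolding SBB_def by (simp add: sum_nonneg)
      then show ?thesis
      proof (intro ballI)
        fix v w assume h: "\<forall>v\<in>B. (\<Sum>w\<in>B. a v w) = 0" and v: "v \<in> B" and w: "w \<in> B"
        have "(\<Sum>w\<in>B. a v w) = 0" using h v by blast
        then have "\<forall>w\<in>B. a v w = 0"
          using sum_nonneg_eq_0_iff[OF finB, of "\<lambda>w. a v w"] ann by simp
        then show "a v w = 0" using w by blast
      qed
    qed
    show "book N E x \<and>
      (\<forall>v w. v < n \<longrightarrow> E u v \<longrightarrow> w < n \<longrightarrow> w \<noteq> u \<longrightarrow> \<not> E u w \<longrightarrow> E v w \<longrightarrow> x w = 1) \<and>
      (\<forall>v w. v < n \<longrightarrow> v \<noteq> u \<longrightarrow> \<not> E u v \<longrightarrow> w < n \<longrightarrow> w \<noteq> u \<longrightarrow> \<not> E u w \<longrightarrow> \<not> E v w)"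
    proof (intro conjI allI impI)
      show "book N E x" by (rule bk)
    next
      fix v w assume h: "v < n" "E u v" "w < n" "w \<noteq> u" "\<not> E u w" "E v w"
      have "v \<in> N" "w \<in> B" unfolding N_def B_def using h by auto
      then have "a v w * (1 - x w) = 0" using z1 by blast
      then show "x w = 1" using h(6) unfolding a_def am_def by simp
    next
      fix v w assume h: "v < n" "v \<noteq> u" "\<not> E u v" "w < n" "w \<noteq> u" "\<not> E u w"
      have "v \<in> B" "w \<in> B" unfolding B_def using h by auto
      then have "a v w = 0" using z2 by blast
      then show "\<not> E v w" unfolding a_def am_def by (cases "E v w") simp_all
    qed
  qed
  ultimately show ?thesis unfolding m_def N_def by blast
qed

end


context sgraph begin

lemma deg_ge:
  assumes u: "u < n" and x01: "\<forall>i<n. 0 \<le> x i \<and> x i \<le> 1" and xu: "x u = 1"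
    and eig: "\<forall>i<n. (\<Sum>j<n. am E i j * x j) = r * x i"
  shows "r \<le> real (card {v. v < n \<and> E u v})"
proof -
  have "r = (\<Sum>j<n. am E u j * x j)" using eig u xu by simp
  also have "\<dots> \<le> (\<Sum>j<n. am E u j)"
    using x01 by (intro sum_mono) (auto simp: am_def)
  also have "(\<Sum>j<n. am E u j) = (\<Sum>j\<in>{..<n}. if E u j then 1 else 0)"
    unfolding am_def by (intro sum.cong) auto
  also have "\<dots> = (\<Sum>j\<in>{j\<in>{..<n}. E u j}. 1)" by (rule sum.inter_filter[symmetric]) simp
  also have "\<dots> = real (card {j\<in>{..<n}. E u j})" by simp
  also have "{j\<in>{..<n}. E u j} = {v. v < n \<and> E u v}" by auto
  finally show ?thesis .
qed

lemma book_edge: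
  assumes "book N E x"
  shows "\<exists>a b. a \<in> N \<and> b \<in> N \<and> a \<noteq> b \<and> x a = 1 \<and> x b = 1 \<and>
     (\<forall>v\<in>N. \<forall>w\<in>N. E v w \<longleftrightarrow> v \<noteq> w \<and> (v = a \<or> v = b \<or> w = a \<or> w = b))"
  using assms unfolding book_def .

lemma ex_notin:
  assumes "finite F" "card F < card S"
  shows "\<exists>y\<in>S. y \<notin> F"
proof (rule ccontr)
  assume "\<not> (\<exists>y\<in>S. y \<notin> F)"
  then have "S \<subseteq> F" by blast
  then have "card S \<le> card F" using card_mono[OF assms(1)] by blast
  then show False using assms(2) by simp
qed

lemma eq_struct:
  assumes ff: "F_free 3 n E" and u: "u < n"
    and x01: "\<forall>i<n. 0 \<le> x i \<and> x i \<le> 1" and xu: "x u = 1"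
    and eig: "\<forall>i<n. (\<Sum>j<n. am E i j * x j) = r * x i"
    and rbig: "r > 13/2" and req: "r^2 - 2*r = real (num_edges n E) - 3"
  shows "\<exists>a b. a \<noteq> b \<and> a < n \<and> b < n \<and> E u a \<and> E u b \<and>
     (\<forall>i j. E i j \<longleftrightarrow> (i = u \<or> (i < n \<and> E u i)) \<and> (j = u \<or> (j < n \<and> E u j)) \<and> i \<noteq> j \<and>
         (i = u \<or> i = a \<or> i = b \<or> j = u \<or> j = a \<or> j = b))"
proof -
  define N where "N = {v. v < n \<and> E u v}"
  have finN: "finite N" unfolding N_def by (rule finite_subset[of _ "{..<n}"]) auto
  have AMu: "book N E x"
    "\<forall>v w. v < n \<longrightarrow> E u v \<longrightarrow> w < n \<longrightarrow> w \<noteq> u \<longrightarrow> \<not> E u w \<longrightarrow> E v w \<longrightarrow> x w = 1"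
    "\<forall>v w. v < n \<longrightarrow> v \<noteq> u \<longrightarrow> \<not> E u v \<longrightarrow> w < n \<longrightarrow> w \<noteq> u \<longrightarrow> \<not> E u w \<longrightarrow> \<not> E v w"
    using at_max[OF ff u x01 xu eig rbig] req unfolding N_def by auto
  obtain a b where ab: "a \<in> N" "b \<in> N" "a \<noteq> b" "x a = 1" "x b = 1"
    and chr: "\<forall>v\<in>N. \<forall>w\<in>N. E v w \<longleftrightarrow> v \<noteq> w \<and> (v = a \<or> v = b \<or> w = a \<or> w = b)"
    using book_edge[OF AMu(1)] by blast
  have cardN: "7 \<le> card N"
  proof -
    have "r \<le> real (card N)" using deg_ge[OF u x01 xu eig] unfolding N_def .
    then show ?thesis using rbig by linarith
  qed
  have uN: "u \<notin> N" unfolding N_def using Eirr by auto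
  have noNB: "\<forall>v w. v < n \<longrightarrow> E u v \<longrightarrow> w < n \<longrightarrow> w \<noteq> u \<longrightarrow> \<not> E u w \<longrightarrow> \<not> E v w"
  proof (intro allI impI notI)
    fix v w assume h: "v < n" "E u v" "w < n" "w \<noteq> u" "\<not> E u w" "E v w"
    have xw: "x w = 1" using AMu(2) h by blast
    define Nw where "Nw = {z. z < n \<and> E w z}"
    have finNw: "finite Nw" unfolding Nw_def by (rule finite_subset[of _ "{..<n}"]) auto
    have bw: "book Nw E x"
      using at_max[OF ff h(3) x01 xw eig rbig] req unfolding Nw_def by auto
    obtain a' b' where ab': "a' \<in> Nw" "b' \<in> Nw" "a' \<noteq> b'"
      and chrw: "\<forall>v\<in>Nw. \<forall>z\<in>Nw. E v z \<longleftrightarrow> v \<noteq> z \<and> (v = a' \<or> v = b' \<or> z = a' \<or> z = b')"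
      using book_edge[OF bw] by blast
    have sub: "\<And>z. z \<in> Nw \<Longrightarrow> z \<in> N"
    proof -
      fix z assume z: "z \<in> Nw"
      then have z1: "z < n" "E w z" unfolding Nw_def by auto
      have zu: "z \<noteq> u" using z1(2) h(5) Esym by blast
      have "E u z"
      proof (rule ccontr)
        assume nz: "\<not> E u z"
        have "\<not> E w z" using AMu(3) h(3,4,5) z1(1) zu nz by blast
        then show False using z1(2) by simp
      qed
      then show "z \<in> N" unfolding N_def using z1 by simp
    qed
    have eab: "E a' b'" using chrw ab' by blast
    have "a' = a \<or> a' = b \<or> b' = a \<or> b' = b" using chr sub ab' eab by blast
    then obtain c where c: "c \<in> Nw" "c = a \<or> c = b"
      using ab' by blast
    define c' where "c' = (if c = a then b else a)"
    have c': "c' \<noteq> c" "c' = a \<or> c' = b" unfolding c'_def using ab(3) c(2) by auto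
    have cNw: "7 \<le> card Nw"
    proof -
      have "r \<le> real (card Nw)" using deg_ge[OF h(3) x01 xw eig] unfolding Nw_def .
      then show ?thesis using rbig by linarith
    qed
    have "card {a,b} = 2" using ab(3) by simp
    then obtain t where t: "t \<in> Nw" "t \<notin> {a,b}"
      using ex_notin[of "{a,b}" Nw] cNw by auto
    have "card {a,b,t} \<le> 3" using card_length[of "[a,b,t]"] by simp
    then obtain t1 where t1: "t1 \<in> N" "t1 \<notin> {a,b,t}"
      using ex_notin[of "{a,b,t}" N] cardN by force
    have "card {a,b,t,t1} \<le> 4" using card_length[of "[a,b,t,t1]"] by simp
    then obtain t2 where t2: "t2 \<in> N" "t2 \<notin> {a,b,t,t1}"
      using ex_notin[of "{a,b,t,t1}" N] cardN by force
    have tN: "t \<in> N" using sub t(1) by blast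
    have cN: "c \<in> N" using c(2) ab by blast
    have c'N: "c' \<in> N" using c'(2) ab by blast
    have wN: "w \<notin> N" unfolding N_def using h(5) by simp
    have lt: "c < n" "w < n" "t < n" "u < n" "t1 < n" "c' < n" "t2 < n"
      using cN h(3) tN u t1(1) c'N t2(1) unfolding N_def by auto
    have E1: "E c w" using c(1) Esym unfolding Nw_def by auto
    have E2: "E c t" using chr cN tN c(2) t(2) by auto
    have E3: "E w t" using t(1) unfolding Nw_def by auto
    have E4: "E c u" using cN Esym unfolding N_def by auto
    have E5: "E c t1" using chr cN t1 c(2) by auto
    have E6: "E u t1" using t1(1) unfolding N_def by auto
    have E7: "E c c'" using chr cN c'N c(2) c'(1) by auto
    have E8: "E c t2" using chr cN t2 c(2) by auto
    have E9: "E c' t2" using chr c'N t2 c'(2) by auto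
    have dist: "distinct [c, w, t, u, t1, c', t2]"
      using c(2) c'(1) c'(2) t(2) t1(2) t2(2) cN tN t1(1) t2(1) wN uN h(4) ab(1,2) by auto
    show False by (rule F3_contra[OF ff Esym' dist lt E1 E2 E3 E4 E5 E6 E7 E8 E9])
  qed
  have abn: "a < n" "b < n" "E u a" "E u b" using ab unfolding N_def by auto
  have char: "\<forall>i j. E i j \<longleftrightarrow> (i = u \<or> (i < n \<and> E u i)) \<and> (j = u \<or> (j < n \<and> E u j)) \<and> i \<noteq> j \<and>
         (i = u \<or> i = a \<or> i = b \<or> j = u \<or> j = a \<or> j = b)"
  proof (intro allI iffI)
    fix i j assume e: "E i j"
    have ij: "i < n" "j < n" "i \<noteq> j" using e Ein Eirr by auto
    show "(i = u \<or> (i < n \<and> E u i)) \<and> (j = u \<or> (j < n \<and> E u j)) \<and> i \<noteq> j \<and>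
         (i = u \<or> i = a \<or> i = b \<or> j = u \<or> j = a \<or> j = b)"
    proof (cases "i = u")
      case True then show ?thesis using e ij by auto
    next
      case iu: False
      show ?thesis
      proof (cases "j = u")
        case True then show ?thesis using e ij Esym by auto
      next
        case ju: False
        have iN: "E u i"
        proof (rule ccontr)
          assume ni: "\<not> E u i"
          show False
          proof (cases "E u j")
            case True
            have "\<not> E j i" using noNB ij True iu ni by blast
            then show False using e Esym by blast
          next
            case False
            have "\<not> E i j" using AMu(3) ij iu ni ju False by blast
            then show False using e by simp
          qed
        qed
        have jN: "E u j"
        proof (rule ccontr)
          assume nj: "\<not> E u j"
          have "\<not> E i j" using noNB ij iN ju nj by blast
          then show False using e by simp
        qed
        have "i \<in> N" "j \<in> N" unfolding N_def using iN jN ij by auto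
        then have "i = a \<or> i = b \<or> j = a \<or> j = b" using chr e by blast
        then show ?thesis using iN jN ij by auto
      qed
    qed
  next
    fix i j assume h: "(i = u \<or> (i < n \<and> E u i)) \<and> (j = u \<or> (j < n \<and> E u j)) \<and> i \<noteq> j \<and>
         (i = u \<or> i = a \<or> i = b \<or> j = u \<or> j = a \<or> j = b)"
    show "E i j"
    proof (cases "i = u")
      case True then show ?thesis using h by auto
    next
      case iu: False
      show ?thesis
      proof (cases "j = u")
        case True then show ?thesis using h iu Esym by auto
      next
        case ju: False
        have "i \<in> N" "j \<in> N" unfolding N_def using h iu ju by auto
        moreover have "i = a \<or> i = b \<or> j = a \<or> j = b" "i \<noteq> j" using h iu ju by auto
        ultimately show ?thesis using chr by blast
      qed
    qed
  qed
  show ?thesis using ab(3) abn char by blast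
qed

end


context sgraph begin

lemma count_edges:
  assumes u: "u < n" and ab: "a \<noteq> b" "a < n" "b < n" "E u a" "E u b"
    and chr: "\<forall>i j. E i j \<longleftrightarrow> (i = u \<or> (i < n \<and> E u i)) \<and> (j = u \<or> (j < n \<and> E u j)) \<and> i \<noteq> j \<and>
         (i = u \<or> i = a \<or> i = b \<or> j = u \<or> j = a \<or> j = b)"
  shows "real (num_edges n E) = 3 * real (card {v. v < n \<and> E u v}) - 3"
proof -
  define N where "N = {v. v < n \<and> E u v}"
  define B where "B = {w. w < n \<and> w \<noteq> u \<and> \<not> E u w}"
  define d where "d = real (card N)"
  define a' where "a' = am E"
  have finN: "finite N" unfolding N_def by (rule finite_subset[of _ "{..<n}"]) auto
  have sp: "\<And>f. (\<Sum>j<n. f j) = f u + (\<Sum>j\<in>N. f j) + (\<Sum>j\<in>B. f j)"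
    unfolding N_def B_def using split3[OF u] by blast
  have abN: "a \<in> N" "b \<in> N" unfolding N_def using ab by auto
  have uN: "u \<notin> N" unfolding N_def using Eirr by auto
  have chr': "\<And>i j. E i j = ((i = u \<or> (i < n \<and> E u i)) \<and> (j = u \<or> (j < n \<and> E u j)) \<and> i \<noteq> j \<and>
         (i = u \<or> i = a \<or> i = b \<or> j = u \<or> j = a \<or> j = b))" using chr by blast
  have nB1: "\<And>i j. i \<in> B \<Longrightarrow> \<not> E i j"
  proof -
    fix i j assume "i \<in> B"
    then have "i \<noteq> u" "\<not> E u i" unfolding B_def by auto
    then show "\<not> E i j" using chr'[of i j] by blast
  qed
  have nB2: "\<And>i j. j \<in> B \<Longrightarrow> \<not> E i j" using nB1 Esym by blast
  have inN: "\<And>i w. i \<in> N \<Longrightarrow> w \<in> N \<Longrightarrow> E i w = (i \<noteq> w \<and> (i = a \<or> i = b \<or> w = a \<or> w = b))"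
  proof -
    fix i w assume "i \<in> N" "w \<in> N"
    then have h: "i < n" "E u i" "w < n" "E u w" "i \<noteq> u" "w \<noteq> u" unfolding N_def using Eirr by auto
    show "E i w = (i \<noteq> w \<and> (i = a \<or> i = b \<or> w = a \<or> w = b))"
      using chr'[of i w] h by blast
  qed
  have Bz: "\<And>i j. i \<in> B \<Longrightarrow> a' i j = 0" unfolding a'_def am_def using nB1 by auto
  have Bz': "\<And>i j. j \<in> B \<Longrightarrow> a' i j = 0" unfolding a'_def am_def using nB2 by auto
  have uz: "a' u u = 0" unfolding a'_def am_def using Eirr by auto
  have uN1: "\<And>j. j \<in> N \<Longrightarrow> a' u j = 1" "\<And>j. j \<in> N \<Longrightarrow> a' j u = 1"
    unfolding N_def a'_def am_def using Esym by auto
  have rowu: "(\<Sum>j<n. a' u j) = d"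
  proof -
    have "(\<Sum>j<n. a' u j) = a' u u + (\<Sum>j\<in>N. a' u j) + (\<Sum>j\<in>B. a' u j)" by (rule sp)
    then show ?thesis unfolding d_def using uz uN1 Bz' by simp
  qed
  have rowB: "\<And>i. i \<in> B \<Longrightarrow> (\<Sum>j<n. a' i j) = 0" using Bz by simp
  have degab: "\<And>i. i \<in> N \<Longrightarrow> i = a \<or> i = b \<Longrightarrow> (\<Sum>w\<in>N. a' i w) = d - 1"
  proof -
    fix i assume i: "i \<in> N" "i = a \<or> i = b"
    have "(\<Sum>w\<in>N. a' i w) = (\<Sum>w\<in>N. if w \<noteq> i then 1 else 0)"
      unfolding a'_def am_def using inN i by (intro sum.cong) auto
    also have "\<dots> = (\<Sum>w\<in>{w\<in>N. w \<noteq> i}. 1)" by (rule sum.inter_filter[symmetric, OF finN])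
    also have "{w\<in>N. w \<noteq> i} = N - {i}" by auto
    moreover have "1 \<le> card N" using i finN card_gt_0_iff[of N] by auto
    ultimately show "(\<Sum>w\<in>N. a' i w) = d - 1" unfolding d_def using i finN
      by (simp add: card_Diff_singleton of_nat_diff)
  qed
  have degt: "\<And>i. i \<in> N - {a,b} \<Longrightarrow> (\<Sum>w\<in>N. a' i w) = 2"
  proof -
    fix i assume i: "i \<in> N - {a,b}"
    have "(\<Sum>w\<in>N. a' i w) = (\<Sum>w\<in>N. if w \<in> {a,b} then 1 else 0)"
      unfolding a'_def am_def using inN i by (intro sum.cong) auto
    also have "\<dots> = (\<Sum>w\<in>{w\<in>N. w \<in> {a,b}}. 1)" by (rule sum.inter_filter[symmetric, OF finN])
    also have "{w\<in>N. w \<in> {a,b}} = {a,b}" using abN by auto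
    finally show "(\<Sum>w\<in>N. a' i w) = 2" using ab(1) by simp
  qed
  have rowN: "\<And>i. i \<in> N \<Longrightarrow> (\<Sum>j<n. a' i j) = 1 + (\<Sum>w\<in>N. a' i w)"
  proof -
    fix i assume i: "i \<in> N"
    have "(\<Sum>j<n. a' i j) = a' i u + (\<Sum>j\<in>N. a' i j) + (\<Sum>j\<in>B. a' i j)" by (rule sp)
    then show "(\<Sum>j<n. a' i j) = 1 + (\<Sum>w\<in>N. a' i w)" using uN1(2)[OF i] Bz' by simp
  qed
  have sumN: "(\<Sum>i\<in>N. \<Sum>j<n. a' i j) = 5 * d - 6"
  proof -
    have "(\<Sum>i\<in>N. \<Sum>j<n. a' i j) = (\<Sum>i\<in>N. 1 + (\<Sum>w\<in>N. a' i w))" using rowN by simp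
    also have "\<dots> = d + (\<Sum>i\<in>N. (\<Sum>w\<in>N. a' i w))" unfolding d_def by (simp add: sum.distrib)
    also have "(\<Sum>i\<in>N. (\<Sum>w\<in>N. a' i w)) = (\<Sum>i\<in>{a,b}. (\<Sum>w\<in>N. a' i w)) + (\<Sum>i\<in>N - {a,b}. (\<Sum>w\<in>N. a' i w))"
      using sum.subset_diff[of "{a,b}" N] finN abN by (simp add: add.commute)
    also have "(\<Sum>i\<in>{a,b}. (\<Sum>w\<in>N. a' i w)) = 2 * (d - 1)" using degab abN ab(1) by simp
    also have "(\<Sum>i\<in>N - {a,b}. (\<Sum>w\<in>N. a' i w)) = 2 * real (card (N - {a,b}))" using degt by simp
    also have "card (N - {a,b}) = card N - 2" using abN ab(1) finN by (simp add: card_Diff_subset)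
    also have "real (card N - 2) = d - 2"
    proof -
      have "card {a,b} \<le> card N" using abN finN by (intro card_mono) auto
      then have "2 \<le> card N" using ab(1) by simp
      then show ?thesis unfolding d_def by (simp add: of_nat_diff)
    qed
    finally show ?thesis by simp
  qed
  have "2 * real (num_edges n E) = (\<Sum>i<n. \<Sum>j<n. a' i j)" unfolding a'_def using handshake by simp
  also have "\<dots> = (\<Sum>j<n. a' u j) + (\<Sum>i\<in>N. \<Sum>j<n. a' i j) + (\<Sum>i\<in>B. \<Sum>j<n. a' i j)" by (rule sp)
  also have "\<dots> = d + (5 * d - 6) + 0" using rowu sumN rowB by simp
  finally show ?thesis unfolding d_def N_def by simp
qed

end


lemma NI_K3: "non_isolated (t+3) (K3_join_edge t) = {..<t+3}"
proof
  show "non_isolated (t+3) (K3_join_edge t) \<subseteq> {..<t+3}" unfolding non_isolated_def by auto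
  show "{..<t+3} \<subseteq> non_isolated (t+3) (K3_join_edge t)"
  proof
    fix k assume k: "k \<in> {..<t+3}"
    show "k \<in> non_isolated (t+3) (K3_join_edge t)"
    proof (cases "k = 0")
      case True then show ?thesis using k unfolding non_isolated_def K3_join_edge_def
        by (intro CollectI conjI exI[of _ 1]) auto
    next
      case False then show ?thesis using k unfolding non_isolated_def K3_join_edge_def
        by (intro CollectI conjI exI[of _ 0]) auto
    qed
  qed
qed

context sgraph begin

lemma make_iso:
  assumes u: "u < n" and ab: "a \<noteq> b" "a < n" "b < n" "E u a" "E u b"
    and chr: "\<forall>i j. E i j \<longleftrightarrow> (i = u \<or> (i < n \<and> E u i)) \<and> (j = u \<or> (j < n \<and> E u j)) \<and> i \<noteq> j \<and>
         (i = u \<or> i = a \<or> i = b \<or> j = u \<or> j = a \<or> j = b)"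
    and t: "t = card {v. v < n \<and> E u v} - 2"
  shows "iso_up_to_isolated n E (t+3) (K3_join_edge t)"
proof -
  define N where "N = {v. v < n \<and> E u v}"
  have finN: "finite N" unfolding N_def by (rule finite_subset[of _ "{..<n}"]) auto
  have chr': "\<And>i j. E i j = ((i = u \<or> (i < n \<and> E u i)) \<and> (j = u \<or> (j < n \<and> E u j)) \<and> i \<noteq> j \<and>
         (i = u \<or> i = a \<or> i = b \<or> j = u \<or> j = a \<or> j = b))" using chr by blast
  have abN: "a \<in> N" "b \<in> N" unfolding N_def using ab by auto
  have uN: "u \<notin> N" unfolding N_def using Eirr by auto
  define V where "V = insert u N"
  have NI: "non_isolated n E = V"
  proof
    show "non_isolated n E \<subseteq> V"
    proof
      fix i assume "i \<in> non_isolated n E"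
      then obtain j where "E i j" unfolding non_isolated_def by auto
      then have "i = u \<or> (i < n \<and> E u i)" using chr'[of i j] by blast
      then show "i \<in> V" unfolding V_def N_def by auto
    qed
    show "V \<subseteq> non_isolated n E"
    proof
      fix i assume "i \<in> V"
      then have "i = u \<or> i \<in> N" unfolding V_def by auto
      then show "i \<in> non_isolated n E"
      proof
        assume "i = u" then show ?thesis unfolding non_isolated_def using u ab by auto
      next
        assume "i \<in> N" then show ?thesis unfolding non_isolated_def N_def using u Esym by auto
      qed
    qed
  qed
  define T where "T = N - {a,b}"
  have cardT: "card T = t" unfolding T_def t N_def[symmetric] using abN finN ab(1)
    by (simp add: card_Diff_subset)
  obtain g where g: "bij_betw g T {3..<t+3}"
    using finite_same_card_bij[of T "{3..<t+3}"] finN cardT unfolding T_def by auto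
  have gT: "\<And>i. i \<in> T \<Longrightarrow> 3 \<le> g i \<and> g i < t + 3" using g unfolding bij_betw_def by auto
  define f where "f = (\<lambda>i. if i = u then 0 else if i = a then 1 else if i = b then (2::nat) else g i)"
  have uab: "u \<noteq> a" "u \<noteq> b" using uN abN by auto
  have fK: "\<And>i. i \<in> V \<Longrightarrow> (f i < 3) = (i = u \<or> i = a \<or> i = b)"
  proof -
    fix i assume "i \<in> V"
    show "(f i < 3) = (i = u \<or> i = a \<or> i = b)"
    proof (cases "i = u \<or> i = a \<or> i = b")
      case True then show ?thesis unfolding f_def by auto
    next
      case False
      then have "i \<in> T" using \<open>i \<in> V\<close> unfolding V_def T_def by auto
      then have "3 \<le> g i" using gT by blast
      then show ?thesis using False unfolding f_def by auto
    qed
  qed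
  have inj: "inj_on f V"
  proof (rule inj_onI)
    fix i j assume i: "i \<in> V" and j: "j \<in> V" and e: "f i = f j"
    show "i = j"
    proof (cases "i = u \<or> i = a \<or> i = b")
      case True
      then have "f i < 3" using fK[OF i] by simp
      then have "j = u \<or> j = a \<or> j = b" using fK[OF j] e by simp
      then show ?thesis using True e ab(1) uab unfolding f_def by auto
    next
      case False
      then have "f i \<ge> 3" using fK[OF i] by simp
      then have jn: "\<not> (j = u \<or> j = a \<or> j = b)" using fK[OF j] e by simp
      have "i \<in> T" "j \<in> T" using i j False jn unfolding V_def T_def by auto
      moreover have "g i = g j" using e False jn unfolding f_def by auto
      ultimately show ?thesis using g unfolding bij_betw_def inj_on_def by blast
    qed
  qed
  have img: "f ` V = {..<t+3}"
  proof
    show "f ` V \<subseteq> {..<t+3}"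
    proof
      fix k assume "k \<in> f ` V"
      then obtain i where i: "i \<in> V" "k = f i" by auto
      show "k \<in> {..<t+3}"
      proof (cases "i = u \<or> i = a \<or> i = b")
        case True then show ?thesis using i unfolding f_def by auto
      next
        case False
        then have "i \<in> T" using i unfolding V_def T_def by auto
        then show ?thesis using gT False i unfolding f_def by auto
      qed
    qed
    show "{..<t+3} \<subseteq> f ` V"
    proof
      fix k assume k: "k \<in> {..<t+3}"
      show "k \<in> f ` V"
      proof (cases "k < 3")
        case True
        then have "k = 0 \<or> k = 1 \<or> k = 2" by auto
        moreover have "f u = 0" "f a = 1" "f b = 2" unfolding f_def using uab ab(1) by auto
        moreover have "u \<in> V" "a \<in> V" "b \<in> V" unfolding V_def using abN by auto
        ultimately show ?thesis by (metis image_eqI)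
      next
        case False
        then have "k \<in> {3..<t+3}" using k by auto
        then have "k \<in> g ` T" using g unfolding bij_betw_def by simp
        then obtain i where i: "i \<in> T" "g i = k" by (auto simp: image_iff)
        have "i \<noteq> u" "i \<noteq> a" "i \<noteq> b" using i(1) uN unfolding T_def by auto
        then have "f i = k" unfolding f_def using i by simp
        moreover have "i \<in> V" using i(1) unfolding V_def T_def by auto
        ultimately show ?thesis by blast
      qed
    qed
  qed
  have edges: "\<forall>i\<in>V. \<forall>j\<in>V. E i j \<longleftrightarrow> K3_join_edge t (f i) (f j)"
  proof (intro ballI)
    fix i j assume i: "i \<in> V" and j: "j \<in> V"
    have Ei: "E i j = (i \<noteq> j \<and> (i = u \<or> i = a \<or> i = b \<or> j = u \<or> j = a \<or> j = b))"
    proof -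
      have "i = u \<or> (i < n \<and> E u i)" "j = u \<or> (j < n \<and> E u j)" using i j unfolding V_def N_def by auto
      then show ?thesis using chr'[of i j] by blast
    qed
    have lt: "f i < t + 3" "f j < t + 3" using img i j by auto
    have ne: "(f i \<noteq> f j) = (i \<noteq> j)" using inj i j unfolding inj_on_def by blast
    show "E i j \<longleftrightarrow> K3_join_edge t (f i) (f j)"
      unfolding K3_join_edge_def Ei using lt ne fK[OF i] fK[OF j] by auto
  qed
  have "bij_betw f V {..<t+3}" unfolding bij_betw_def using inj img by auto
  then show ?thesis unfolding iso_up_to_isolated_def NI NI_K3 using edges by blast
qed

end


lemma Ksum:
  fixes L :: real
  assumes L: "L > 0" "L * L = 2 * L + 3 * real t" and c: "c < t + 3"
  shows "(\<Sum>k<t+3. (if K3_join_edge t c k then 1 else 0) * (if k < 3 then 1 else 3 / L)) =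
         L * (if c < 3 then 1 else 3 / L)"
proof -
  define h where "h = (\<lambda>k. (if K3_join_edge t c k then 1 else 0) * (if k < 3 then 1 else 3 / L))"
  have split: "{..<t+3} = {..<3} \<union> {3..<t+3}" by auto
  have "(\<Sum>k<t+3. h k) = (\<Sum>k<3. h k) + (\<Sum>k\<in>{3..<t+3}. h k)"
    unfolding split by (rule sum.union_disjoint) auto
  moreover have s1: "(\<Sum>k<3. h k) = h 0 + h 1 + h 2"
  proof -
    have "{..<3::nat} = {0,1,2}" by auto
    then show ?thesis by simp
  qed
  ultimately have tot: "(\<Sum>k<t+3. h k) = h 0 + h 1 + h 2 + (\<Sum>k\<in>{3..<t+3}. h k)" by simp
  show ?thesis
  proof (cases "c < 3")
    case True
    have hk: "\<And>k. k \<in> {3..<t+3} \<Longrightarrow> h k = 3 / L"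
      unfolding h_def K3_join_edge_def using True c by auto
    have "(\<Sum>k\<in>{3..<t+3}. h k) = real t * (3 / L)" using hk by simp
    moreover have "h 0 + h 1 + h 2 = 2"
      using True c unfolding h_def K3_join_edge_def by (cases "c = 0"; cases "c = 1"; auto)
    moreover have "2 + real t * (3 / L) = L"
    proof -
      have e: "L * (2 + real t * (3 / L)) = L * L" using L by (simp add: field_simps)
      have "L \<noteq> 0" using L by simp
      then show ?thesis using e mult_cancel_left[of L "2 + real t * (3 / L)" L] by blast
    qed
    ultimately show ?thesis using tot True unfolding h_def by simp
  next
    case False
    have hk: "\<And>k. k \<in> {3..<t+3} \<Longrightarrow> h k = 0"
      unfolding h_def K3_join_edge_def using False by auto
    have "(\<Sum>k\<in>{3..<t+3}. h k) = 0" using hk by simp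
    moreover have "h 0 + h 1 + h 2 = 3"
      using False c unfolding h_def K3_join_edge_def by auto
    ultimately show ?thesis using tot False L unfolding h_def by simp
  qed
qed

context sgraph begin

lemma iso_lower:
  assumes n: "n > 0" and iso: "iso_up_to_isolated n E (t+3) (K3_join_edge t)"
  shows "1 + sqrt (3 * real t + 1) \<le> graph_spectral_radius n E"
proof -
  define NI where "NI = non_isolated n E"
  obtain f where f: "bij_betw f NI {..<t+3}"
    and fe: "\<forall>i\<in>NI. \<forall>j\<in>NI. E i j \<longleftrightarrow> K3_join_edge t (f i) (f j)"
    using iso unfolding iso_up_to_isolated_def NI_K3 NI_def by blast
  have NIn: "NI \<subseteq> {..<n}" unfolding NI_def non_isolated_def by auto
  define L where "L = 1 + sqrt (3 * real t + 1)"
  have Lp: "L > 0" unfolding L_def by (simp add: add_pos_nonneg)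
  have LL: "L * L = 2 * L + 3 * real t"
  proof -
    have "(sqrt (3 * real t + 1))^2 = 3 * real t + 1" by simp
    then show ?thesis unfolding L_def by (simp add: algebra_simps power2_eq_square)
  qed
  define y where "y = (\<lambda>k::nat. if k < 3 then 1 else 3 / L)"
  define v where "v = (\<lambda>i. if i \<in> NI then y (f i) else 0)"
  have eig: "\<forall>i<n. (\<Sum>j<n. am E i j * v j) = L * v i"
  proof (intro allI impI)
    fix i assume i: "i < n"
    show "(\<Sum>j<n. am E i j * v j) = L * v i"
    proof (cases "i \<in> NI")
      case False
      then have "\<forall>j<n. \<not> E i j" using i unfolding NI_def non_isolated_def by auto
      then have "(\<Sum>j<n. am E i j * v j) = 0" unfolding am_def by simp
      then show ?thesis using False unfolding v_def by simp
    next
      case True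
      have "(\<Sum>j<n. am E i j * v j) = (\<Sum>j\<in>NI. am E i j * v j)"
        by (rule sum.mono_neutral_right) (use NIn in \<open>auto simp: v_def\<close>)
      also have "\<dots> = (\<Sum>j\<in>NI. (if K3_join_edge t (f i) (f j) then 1 else 0) * y (f j))"
        using fe True unfolding v_def am_def by (intro sum.cong refl) auto
      also have "\<dots> = (\<Sum>k\<in>{..<t+3}. (if K3_join_edge t (f i) k then 1 else 0) * y k)"
        using sum.reindex_bij_betw[OF f, of "\<lambda>k. (if K3_join_edge t (f i) k then 1 else 0) * y k"] .
      also have "\<dots> = L * y (f i)"
      proof -
        have "f i < t + 3" using f True unfolding bij_betw_def by auto
        then show ?thesis unfolding y_def using Ksum[OF Lp LL] by simp
      qed
      finally show ?thesis using True unfolding v_def by simp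
    qed
  qed
  have nz: "\<exists>i<n. v i \<noteq> 0"
  proof -
    have "(0::nat) \<in> f ` NI" using f unfolding bij_betw_def by simp
    then obtain i where "i \<in> NI" "f i = 0" by auto
    then show ?thesis using NIn unfolding v_def y_def by (intro exI[of _ i]) auto
  qed
  have "\<bar>L\<bar> \<le> spectral_radius (rmat n (am E))" by (rule eig_lower[OF n nz eig])
  then show ?thesis using Lp unfolding L_def rho_eq by simp
qed

end



theorem theorem1p5:
  fixes n m :: nat and E :: "nat \<Rightarrow> nat \<Rightarrow> bool"
  assumes "simple_graph n E"
    and "F_free 3 n E"
    and "num_edges n E = m"
    and "m \<ge> 33"
  shows "graph_spectral_radius n E \<le> 1 + sqrt (real m - 2) \<and>
         (graph_spectral_radius n E = 1 + sqrt (real m - 2) \<longleftrightarrow>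
           3 dvd m \<and> iso_up_to_isolated n E ((m - 3) div 3 + 3) (K3_join_edge ((m - 3) div 3)))"
proof -
  interpret sgraph n E using assms(1) by unfold_locales
  note ff = assms(2)
  have npos: "n > 0"
  proof (rule ccontr)
    assume "\<not> n > 0"
    then have "n = 0" by simp
    then have "Sx = {}" unfolding Sx_def by auto
    then have "num_edges n E = 0" using num_Sx by simp
    then show False using assms(3,4) by simp
  qed
  interpret sm: symmat n "am E" using symmat[OF npos] .
  define r where "r = graph_spectral_radius n E"
  have r_eq: "r = spectral_radius (rmat n (am E))" unfolding r_def rho_eq ..
  obtain v where v0: "\<forall>i. 0 \<le> v i" and vnz: "\<exists>i<n. v i \<noteq> 0"
    and veig: "\<forall>i<n. (\<Sum>j<n. am E i j * v j) = r * v i"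
    using sm.perron unfolding r_eq[symmetric] by blast
  define Mx where "Mx = Max (v ` {..<n})"
  have Mxin: "Mx \<in> v ` {..<n}" unfolding Mx_def using npos by (intro Max_in) auto
  then obtain u where u: "u < n" "v u = Mx" by auto
  have vle: "\<And>i. i < n \<Longrightarrow> v i \<le> Mx" unfolding Mx_def by (intro Max_ge) auto
  have Mxpos: "Mx > 0"
  proof -
    obtain i where "i < n" "v i \<noteq> 0" using vnz by blast
    then have "v i > 0" using v0 by (metis less_eq_real_def)
    then show ?thesis using vle \<open>i < n\<close> by (meson less_le_trans)
  qed
  define x where "x = (\<lambda>i. v i / Mx)"
  have x01: "\<forall>i<n. 0 \<le> x i \<and> x i \<le> 1"
    unfolding x_def using v0 vle Mxpos by (auto simp: divide_le_eq_1)
  have xu: "x u = 1" unfolding x_def using u Mxpos by simp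
  have eig: "\<forall>i<n. (\<Sum>j<n. am E i j * x j) = r * x i"
  proof (intro allI impI)
    fix i assume i: "i < n"
    have "(\<Sum>j<n. am E i j * x j) = (\<Sum>j<n. am E i j * v j) / Mx"
      unfolding x_def by (simp add: sum_divide_distrib)
    also have "\<dots> = r * x i" using veig i unfolding x_def by simp
    finally show "(\<Sum>j<n. am E i j * x j) = r * x i" .
  qed
  have s31: "sqrt (real m - 2) > 11/2"
  proof -
    have "(11/2::real)^2 < real m - 2" using assms(4) by (simp add: power2_eq_square)
    then show ?thesis by (rule real_less_rsqrt)
  qed
  have main: "r \<le> 1 + sqrt (real m - 2)"
  proof (cases "r \<le> 13/2")
    case True then show ?thesis using s31 by linarith
  next
    case False
    then have "r > 13/2" by simp
    from at_max[OF ff u(1) x01 xu eig this] assms(3)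
    have "r^2 - 2*r \<le> real m - 3" by blast
    then have "(r - 1)^2 \<le> real m - 2" by (simp add: power2_eq_square algebra_simps)
    then have "sqrt ((r - 1)^2) \<le> sqrt (real m - 2)" by (rule real_sqrt_le_mono)
    then show ?thesis by simp
  qed
  have fwd: "r = 1 + sqrt (real m - 2) \<Longrightarrow>
     3 dvd m \<and> iso_up_to_isolated n E ((m - 3) div 3 + 3) (K3_join_edge ((m - 3) div 3))"
  proof -
    assume req: "r = 1 + sqrt (real m - 2)"
    have rbig: "r > 13/2" using req s31 by linarith
    have "(r - 1)^2 = real m - 2" using req assms(4) by simp
    then have req2: "r^2 - 2*r = real (num_edges n E) - 3" using assms(3)
      by (simp add: power2_eq_square algebra_simps)
    obtain a b where ab: "a \<noteq> b" "a < n" "b < n" "E u a" "E u b"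
      and chr: "\<forall>i j. E i j \<longleftrightarrow> (i = u \<or> (i < n \<and> E u i)) \<and> (j = u \<or> (j < n \<and> E u j)) \<and> i \<noteq> j \<and>
         (i = u \<or> i = a \<or> i = b \<or> j = u \<or> j = a \<or> j = b)"
      using eq_struct[OF ff u(1) x01 xu eig rbig req2] by blast
    define d where "d = card {v. v < n \<and> E u v}"
    have "real (num_edges n E) = 3 * real d - 3" unfolding d_def by (rule count_edges[OF u(1) ab chr])
    then have md: "m + 3 = 3 * d" using assms(3) by linarith
    have m3: "(m - 3) div 3 = d - 2" using md assms(4) by simp
    have dv: "3 dvd m"
    proof -
      have "m = 3 * (d - 1)" using md assms(4) by simp
      then show ?thesis by simp
    qed
    have "iso_up_to_isolated n E (d - 2 + 3) (K3_join_edge (d - 2))"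
      by (rule make_iso[OF u(1) ab chr]) (simp add: d_def)
    then show ?thesis using dv m3 by simp
  qed
  have bwd: "3 dvd m \<Longrightarrow> iso_up_to_isolated n E ((m - 3) div 3 + 3) (K3_join_edge ((m - 3) div 3))
     \<Longrightarrow> r = 1 + sqrt (real m - 2)"
  proof -
    assume dv: "3 dvd m" and iso: "iso_up_to_isolated n E ((m - 3) div 3 + 3) (K3_join_edge ((m - 3) div 3))"
    define t where "t = (m - 3) div 3"
    have mt: "m = 3 * t + 3" unfolding t_def using dv assms(4) by auto
    have "1 + sqrt (3 * real t + 1) \<le> r" unfolding r_def
      by (rule iso_lower[OF npos]) (use iso t_def in simp)
    moreover have "3 * real t + 1 = real m - 2" using mt by simp
    ultimately show ?thesis using main by simp
  qed
  show ?thesis unfolding r_def[symmetric] using main fwd bwd by blast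
qed

end
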